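(* With $u,v,\Delta$ as in the context: (i) $u$ is strictly increasing from $[0,1)$ onto $[9/16,\,2/\pi)$; (ii) $\Delta$ is strictly increasing from $(0,1)$ onto $(0,+\infty)$; (iii) the function $w_+(x)=\frac12\log(1-x)+\frac{v(x)+\sqrt{\Delta(x)}}{2u(x)}$, defined on $[0,1)$, extends to a continuous function on $[0,1]$ with $w_+(0)=4/3$ and $w_+(1)=\log4$; consequently it attains a maximum $a_c$, and $a_c\ge\log 4$; (iv) the function $w_-(x)=\frac12\log(1-x)+\frac{v(x)-\sqrt{\Delta(x)}}{2u(x)}$ is continuous on $[0,1)$ with $w_-(0)=4/3$ and $\lim_{x\to1^-}w_-(x)=-\infty$.
   Context: ${}_2F_1$ denotes the Gauss hypergeometric function. For $x\in[0,1)$: $u(x)=\frac1{16}(1-x)\,{}_2F_1(3/2,3/2;3;x)+\frac12\,{}_2F_1(1/2,1/2;2;x)$, $v(x)=\frac12\,{}_2F_1(1/2,1/2;2;x)+{}_2F_1(1/2,1/2;1;x)$, $\Delta(x)=v(x)^2-4u(x)\,{}_2F_1(1/2,1/2;1;x)$. *)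

theory Defs
  imports "HOL-Analysis.Analysis"
begin

definition hyp2F1 :: "real \<Rightarrow> real \<Rightarrow> real \<Rightarrow> real \<Rightarrow> real" where
  "hyp2F1 a b c x =
     (\<Sum>n. pochhammer a n * pochhammer b n / (pochhammer c n * fact n) * x ^ n)"

definition u_fun :: "real \<Rightarrow> real" where
  "u_fun x = 1/16 * (1 - x) * hyp2F1 (3/2) (3/2) 3 x + 1/2 * hyp2F1 (1/2) (1/2) 2 x"

definition v_fun :: "real \<Rightarrow> real" where
  "v_fun x = 1/2 * hyp2F1 (1/2) (1/2) 2 x + hyp2F1 (1/2) (1/2) 1 x"

definition Delta_fun :: "real \<Rightarrow> real" where
  "Delta_fun x = (v_fun x)^2 - 4 * u_fun x * hyp2F1 (1/2) (1/2) 1 x"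

definition w_plus :: "real \<Rightarrow> real" where
  "w_plus x = 1/2 * ln (1 - x) + (v_fun x + sqrt (Delta_fun x)) / (2 * u_fun x)"

definition w_minus :: "real \<Rightarrow> real" where
  "w_minus x = 1/2 * ln (1 - x) + (v_fun x - sqrt (Delta_fun x)) / (2 * u_fun x)"

end

theory Submission
  imports Defs "HOL-Analysis.Analysis" "HOL-Real_Asymp.Real_Asymp"
begin

definition A :: "nat \<Rightarrow> real" where "A n = pochhammer (1/2) n / fact n"
lemma A_0[simp]: "A 0 = 1" by (simp add: A_def)
lemma A_Suc: "A (Suc n) = A n * (real n + 1/2) / (real n + 1)"
  unfolding A_def by (simp add: pochhammer_Suc field_simps)
lemma A_pos: "A n > 0"
  by (induction n) (auto simp: A_Suc)

lemma one_le_div: "0 < b \<Longrightarrow> b \<le> a \<Longrightarrow> 1 \<le> a / (b::real)" by simp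

lemma frac_aux: "d \<noteq> 0 \<Longrightarrow> e \<noteq> 0 \<Longrightarrow> (1-x)/e + x/d = (1 - x*(d-e)/d)/(e::real)"
  by (simp add: field_simps)

lemma wallis_A: "(\<Prod>k=1..n. (4*real k^2) / (4*real k^2 - 1)) = 1 / ((2*real n+1) * A n ^ 2)"
proof (induction n)
  case 0 then show ?case by simp
next
  case (Suc n)
  have "A n > 0" by (rule A_pos)
  have "(\<Prod>k=1..Suc n. (4*real k^2) / (4*real k^2 - 1)) =
        (\<Prod>k=1..n. (4*real k^2) / (4*real k^2 - 1)) * ((4*real (Suc n)^2) / (4*real (Suc n)^2 - 1))"
    by (simp add: prod.nat_ivl_Suc')
  also have "\<dots> = 1 / ((2*real (Suc n)+1) * A (Suc n) ^ 2)"
    unfolding Suc A_Suc using \<open>A n > 0\<close>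
    by (simp add: field_simps power2_eq_square)
  finally show ?case .
qed

lemma wallis_lim: "(\<lambda>n. (2*real n+1) * A n ^ 2) \<longlonglongrightarrow> 2/pi"
proof -
  have "(\<lambda>n. inverse (\<Prod>k=1..n. (4*real k^2) / (4*real k^2 - 1))) \<longlonglongrightarrow> inverse (pi/2)"
    by (intro tendsto_inverse wallis) simp
  then show ?thesis unfolding wallis_A by simp
qed

lemma wallis_le: "2/pi \<le> (2*real n+1) * A n ^ 2"
proof -
  let ?P = "\<lambda>n. (\<Prod>k=1..n. (4*real k^2) / (4*real k^2 - 1))"
  have inc: "incseq ?P"
  proof (rule incseq_SucI)
    fix m
    have "?P m \<ge> 0"
    proof (intro prod_nonneg divide_nonneg_nonneg)
      fix k assume "k \<in> {1..m}"
      then have "real k \<ge> 1" by simp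
      then have "real k ^ 2 \<ge> 1" by (simp add: one_le_power)
      then show "0 \<le> 4 * real k ^ 2 - 1" by simp
    qed simp
    moreover have "1 \<le> (4*real (Suc m)^2) / (4*real (Suc m)^2 - 1)"
      by (intro one_le_div) (simp_all add: power2_eq_square algebra_simps add_pos_nonneg)
    ultimately have "?P m * 1 \<le> ?P m * ((4*real (Suc m)^2) / (4*real (Suc m)^2 - 1))"
      by (intro mult_left_mono) auto
    then show "?P m \<le> ?P (Suc m)" by (simp add: prod.nat_ivl_Suc')
  qed
  have "?P n \<le> pi/2" by (rule incseq_le[OF inc wallis])
  then have "1 / ((2*real n+1) * A n ^ 2) \<le> pi / 2" unfolding wallis_A .
  moreover have "(2*real n+1) * A n ^ 2 > 0" using A_pos[of n] by simp
  ultimately show ?thesis by (simp add: field_simps)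
qed

lemma nA_lim: "(\<lambda>n. real n * A n ^ 2) \<longlonglongrightarrow> 1/pi"
proof -
  have "(\<lambda>n. (real n / (2*real n+1)) * ((2*real n+1) * A n ^ 2)) \<longlonglongrightarrow> 1/2 * (2/pi)"
    by (intro tendsto_mult wallis_lim) real_asymp
  moreover have "(\<lambda>n. (real n / (2*real n+1)) * ((2*real n+1) * A n ^ 2)) = (\<lambda>n. real n * A n ^ 2)"
    by (rule ext) (simp add: field_simps add_pos_pos)
  ultimately show ?thesis by simp
qed

lemma nA_le: "real n * A n ^ 2 \<le> 1/pi"
proof -
  let ?B = "\<lambda>n. real (Suc n) * A (Suc n) ^ 2"
  have inc: "incseq ?B"
  proof (rule incseq_SucI)
    fix m
    have "A (Suc m) > 0" by (rule A_pos)
    have e: "A (Suc (Suc m)) = A (Suc m) * (real m + 3/2) / (real m + 2)"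
      using A_Suc[of "Suc m"] by (simp add: algebra_simps)
    have "?B (Suc m) = ?B m * ((real m + 3/2)^2 / ((real m + 2) * (real m + 1)))"
      unfolding e by (simp add: divide_simps power2_eq_square) (simp add: algebra_simps)
    moreover have "1 \<le> (real m + 3/2)^2 / ((real m + 2) * (real m + 1))"
      by (intro one_le_div) (simp_all add: power2_eq_square algebra_simps add_pos_nonneg)
    moreover have "?B m \<ge> 0" by simp
    ultimately show "?B m \<le> ?B (Suc m)"
      by (metis mult.right_neutral mult_left_mono)
  qed
  have lim: "?B \<longlonglongrightarrow> 1/pi" using nA_lim by (rule LIMSEQ_Suc)
  show ?thesis
  proof (cases n)
    case 0 then show ?thesis by simp
  next
    case (Suc m) then show ?thesis using incseq_le[OF inc lim, of m] by simp
  qed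
qed

lemma A_sq_le: "A n ^ 2 \<le> 2 / (real n + 1)"
proof (cases n)
  case 0 then show ?thesis by simp
next
  case (Suc m)
  have "A n ^ 2 * real n \<le> 1/pi" using nA_le[of n] by (simp only: mult.commute)
  then have "A n ^ 2 \<le> (1/pi) / real n" using Suc by (simp add: pos_le_divide_eq mult_ac)
  also have "\<dots> \<le> (1/3) / real n"
    using Suc pi_gt3 by (intro divide_right_mono) (auto simp: field_simps)
  also have "\<dots> \<le> 2 / (real n + 1)"
    using Suc by (simp add: field_simps)
  finally show ?thesis .
qed

lemma summable_inv_sq_Suc: "summable (\<lambda>n. 1 / (real n + 1)^2)"
proof -
  have "summable (\<lambda>n. inverse (real n ^ 2))" by (rule inverse_power_summable) simp
  then have "summable (\<lambda>n. inverse (real (Suc n) ^ 2))" by (subst summable_Suc_iff)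
  then show ?thesis by (simp add: field_simps)
qed

definition q :: "nat \<Rightarrow> real" where
  "q n = (if n = 0 then 0 else 1/(pi * real n) - A n ^ 2)"

lemma q_nonneg: "0 \<le> q n"
proof (cases "n = 0")
  case False
  have "real n * A n ^ 2 \<le> 1/pi" by (rule nA_le)
  then show ?thesis using False by (simp add: q_def field_simps)
qed (simp add: q_def)

lemma q_le: "q n \<le> inverse (real n ^ 2)"
proof (cases "n = 0")
  case False
  have "2/pi \<le> (2*real n+1) * A n ^ 2" by (rule wallis_le)
  then have "2/pi \<le> A n ^ 2 * (2*real n+1)" by (simp only: mult.commute)
  then have "(2/pi)/(2*real n+1) \<le> A n ^ 2" by (simp add: pos_divide_le_eq mult_ac)
  then have "q n \<le> 1/(pi * real n) - 2/(pi*(2*real n+1))" using False by (simp add: q_def)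
  also have "\<dots> = 1/(pi * real n * (2*real n+1))"
  proof -
    have "pi * real n \<noteq> 0" "pi * (2*real n+1) \<noteq> 0" using False by auto
    then have "1/(pi * real n) - 2/(pi*(2*real n+1)) = (1 * (pi*(2*real n+1)) - 2 * (pi * real n)) / ((pi * real n) * (pi*(2*real n+1)))"
      by (rule diff_frac_eq)
    also have "\<dots> = pi / ((pi * real n) * (pi*(2*real n+1)))" by (simp add: algebra_simps)
    also have "\<dots> = 1/(pi * real n * (2*real n+1))" by simp
    finally show ?thesis .
  qed
  also have "\<dots> \<le> 1 / (real n * real n)"
  proof (rule divide_left_mono)
    have "real n * real n \<le> real n * (2*real n+1)" by (auto simp: algebra_simps)
    also have "\<dots> = 1 * (real n * (2*real n+1))" by simp
    also have "\<dots> \<le> pi * (real n * (2*real n+1))"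
      using pi_gt3 by (intro mult_right_mono) auto
    finally show "real n * real n \<le> pi * real n * (2 * real n + 1)" by (simp add: mult.assoc)
    show "0 < pi * real n * (2 * real n + 1) * (real n * real n)" using False by simp
  qed simp
  also have "\<dots> = inverse (real n ^ 2)" by (simp add: power2_eq_square divide_inverse)
  finally show ?thesis .
qed (simp add: q_def)

lemma summable_q: "summable q"
proof (rule summable_comparison_test[OF _ inverse_power_summable[of 2]])
  show "\<exists>N. \<forall>n\<ge>N. norm (q n) \<le> inverse (real n ^ 2)"
    using q_nonneg q_le by (intro exI[of _ 0]) simp
qed simp

lemma lim_zero_of_summable:
  fixes t :: "nat \<Rightarrow> real"
  assumes "summable t" "\<And>n. 0 \<le> t n" "(\<lambda>n. real (Suc n) * t n) \<longlonglongrightarrow> L"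
  shows "L = 0"
proof (rule ccontr)
  assume "L \<noteq> 0"
  have "\<forall>n\<ge>0. 0 \<le> real (Suc n) * t n"
    using assms(2) by simp
  then have "L \<ge> 0" using LIMSEQ_le_const[OF assms(3), of 0] by blast
  with \<open>L \<noteq> 0\<close> have "L > 0" by simp
  then have "eventually (\<lambda>n. real (Suc n) * t n > L/2) sequentially"
    using order_tendstoD(1)[OF assms(3), of "L/2"] by simp
  then have ev: "eventually (\<lambda>n. norm ((L/2) / real (Suc n)) \<le> t n) sequentially"
  proof eventually_elim
    case (elim n)
    have pos: "0 < real (Suc n)" by (rule of_nat_0_less_iff[THEN iffD2]) simp
    have "L/2 \<le> t n * real (Suc n)" using elim by (metis less_imp_le mult.commute)
    then have "(L/2) / real (Suc n) \<le> t n" using pos_divide_le_eq[OF pos] by blast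
    moreover have "norm ((L/2) / real (Suc n)) = (L/2) / real (Suc n)"
      unfolding real_norm_def using \<open>L > 0\<close> pos by (intro abs_of_nonneg) simp
    ultimately show ?case by simp
  qed
  have "summable (\<lambda>n. (L/2) / real (Suc n))"
    by (rule summable_comparison_test_ev[OF ev assms(1)])
  then have "summable (\<lambda>n. (2/L) * ((L/2) / real (Suc n)))" by (rule summable_mult)
  moreover have "(\<lambda>n. (2/L) * ((L/2) / real (Suc n))) = (\<lambda>n. inverse (real (Suc n)))"
    using \<open>L > 0\<close> by (intro ext) (simp add: field_simps)
  ultimately have "summable (\<lambda>n. inverse (real (Suc n)))" by simp
  then have "summable (\<lambda>n. inverse (real n))" using summable_Suc_iff[of "\<lambda>n. inverse (real n)"] by simp
  then show False using not_summable_harmonic by blast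
qed

definition p :: "real \<Rightarrow> nat \<Rightarrow> real" where
  "p e n = fact n / pochhammer (1+e) n"

lemma poch_pos: "c > 0 \<Longrightarrow> pochhammer (c::real) n > 0"
  by (induction n) (auto simp: pochhammer_Suc)

lemma p_Suc: "e > -1 \<Longrightarrow> p e (Suc n) = p e n * (real n + 1) / (real n + 1 + e)"
  unfolding p_def by (simp add: pochhammer_Suc field_simps)

lemma p_0[simp]: "p e 0 = 1" by (simp add: p_def)

lemma p_pos: "e > -1 \<Longrightarrow> p e n > 0"
  unfolding p_def using poch_pos[of "1+e" n] by simp

lemma p_le1: "e \<ge> 0 \<Longrightarrow> p e n \<le> 1"
proof (induction n)
  case (Suc n)
  have "p e (Suc n) = p e n * ((real n + 1) / (real n + 1 + e))" using Suc by (simp add: p_Suc)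
  also have "\<dots> \<le> 1 * 1"
    using Suc p_pos[of e n] by (intro mult_mono) auto
  finally show ?case by simp
qed simp

lemma p_zero[simp]: "p 0 n = 1"
  by (simp add: p_def pochhammer_fact[symmetric])

lemma p_harm_sums:
  assumes e: "e > 0"
  shows "(\<lambda>n. p e (Suc n) / real (Suc n)) sums (1/e)"
proof -
  have part: "(\<Sum>n<N. p e (Suc n) / real (Suc n)) = (1 - p e N) / e" for N
  proof (induction N)
    case (Suc N)
    have "p e (Suc N) = p e N * (real N + 1) / (real N + 1 + e)" using e by (simp add: p_Suc)
    note ps = this
    have pos: "real N + 1 + e \<noteq> 0" "real N + 1 \<noteq> 0" "e \<noteq> 0" using e by auto
    have "(\<Sum>n<Suc N. p e (Suc n) / real (Suc n)) = (1 - p e N) / e + p e (Suc N) / (real N + 1)"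
      using Suc by simp
    also have "\<dots> = (1 - p e N) / e + p e N / (real N + 1 + e)"
      unfolding ps using pos by simp
    also have "\<dots> = (1 - p e N * ((real N + 1 + e) - e) / (real N + 1 + e)) / e"
      by (rule frac_aux) (use pos in auto)
    also have "\<dots> = (1 - p e (Suc N)) / e" unfolding ps by simp
    finally show ?case .
  qed simp
  have dec: "decseq (p e)"
  proof (rule decseq_SucI)
    fix n
    have "p e (Suc n) = p e n * ((real n + 1) / (real n + 1 + e))" using e by (simp add: p_Suc)
    also have "\<dots> \<le> p e n * 1"
      using e p_pos[of e n] by (intro mult_left_mono) auto
    finally show "p e (Suc n) \<le> p e n" by simp
  qed
  have bs: "Bseq (p e)"
  proof (rule BseqI'[where K=1])
    fix n show "norm (p e n) \<le> 1" using p_le1[of e n] p_pos[of e n] e by simp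
  qed
  have "convergent (p e)"
    using dec bs by (intro Bseq_monoseq_convergent) (auto simp: monoseq_iff)
  then obtain L where L: "p e \<longlonglongrightarrow> L" by (auto simp: convergent_def)
  have S: "(\<lambda>n. p e (Suc n) / real (Suc n)) sums ((1 - L)/e)"
    unfolding sums_def part by (intro tendsto_intros L) (use e in simp)
  have "L = 0"
  proof (rule lim_zero_of_summable[where t = "\<lambda>n. p e (Suc n) / real (Suc n)"])
    show "summable (\<lambda>n. p e (Suc n) / real (Suc n))" using S by (rule sums_summable)
    show "0 \<le> p e (Suc n) / real (Suc n)" for n using p_pos[of e "Suc n"] e by simp
    have "(\<lambda>n. p e (Suc n)) \<longlonglongrightarrow> L" using L by (rule LIMSEQ_Suc)
    then show "(\<lambda>n. real (Suc n) * (p e (Suc n) / real (Suc n))) \<longlonglongrightarrow> L" by simp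
  qed
  with S show ?thesis by simp
qed

definition t :: "real \<Rightarrow> nat \<Rightarrow> real" where
  "t c n = A n ^ 2 * fact n / pochhammer c n"

lemma t_pos: "c > 0 \<Longrightarrow> t c n > 0"
  unfolding t_def using poch_pos[of c n] A_pos[of n] by simp

lemma t_0[simp]: "t c 0 = 1" by (simp add: t_def)

lemma aux1: "P \<noteq> 0 \<Longrightarrow> d \<noteq> 0 \<Longrightarrow> m \<noteq> 0 \<Longrightarrow>
  (a*h/m)^2 * (m*f) / (P*d) = (a^2*f/P) * h^2 / (m*(d::real))"
  by (simp add: field_simps power2_eq_square)

lemma aux2: "c \<noteq> 0 \<Longrightarrow> P \<noteq> 0 \<Longrightarrow> d \<noteq> 0 \<Longrightarrow> X / (P*d/c) = (X/P) * c / (d::real)"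
  by (simp add: field_simps)

lemma aux3: "d \<noteq> 0 \<Longrightarrow> m \<noteq> 0 \<Longrightarrow>
  c*(c-1)*T - (c-1/2)^2*(T*c/d) - (-c*m*(T*h/(m*d)) - (-c*x*T))
   = T*(c*(c-1)*d - (c-1/2)^2*c + c*h - c*x*d)/(d::real)"
  by (simp add: field_simps)

lemma aux4: "a \<noteq> 0 \<Longrightarrow> c \<noteq> 0 \<Longrightarrow> b \<noteq> 0 \<Longrightarrow> (2/(c*a))*(a/b) = 2/(c*(b::real))"
  by (simp add: field_simps)

lemma t_Suc: "c > 0 \<Longrightarrow> t c (Suc n) = t c n * (real n + 1/2)^2 / ((real n + 1) * (c + real n))"
proof -
  assume c: "c > 0"
  have nz: "pochhammer c n \<noteq> 0" "c + real n \<noteq> 0" "real n + 1 \<noteq> 0" using poch_pos[OF c, of n] c by auto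
  have f: "fact (Suc n) = (real n + 1) * (fact n :: real)" by (simp add: algebra_simps)
  have "t c (Suc n) = (A n * (real n + 1/2) / (real n + 1))^2 * ((real n + 1) * fact n) / (pochhammer c n * (c + real n))"
    unfolding t_def A_Suc f pochhammer_Suc ..
  also have "\<dots> = (A n ^2 * fact n / pochhammer c n) * (real n + 1/2)^2 / ((real n + 1) * (c + real n))"
    by (rule aux1) (use nz in auto)
  finally show ?thesis unfolding t_def .
qed

lemma t_shift: "c > 0 \<Longrightarrow> t (c+1) n = t c n * c / (c + real n)"
proof -
  assume c: "c > 0"
  have e: "c * pochhammer (c+1) n = pochhammer c n * (c + real n)"
    using pochhammer_rec[of c n] pochhammer_Suc[of c n] by simp
  have nz: "pochhammer c n \<noteq> 0" "c + real n \<noteq> 0" "c \<noteq> 0" using poch_pos[OF c, of n] c by auto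
  have pe: "pochhammer (c+1) n = pochhammer c n * (c + real n) / c" using e nz(3)
    by (metis nonzero_mult_div_cancel_left)
  have "t (c+1) n = (A n ^ 2 * fact n) / (pochhammer c n * (c + real n) / c)"
    unfolding t_def pe ..
  also have "\<dots> = ((A n ^ 2 * fact n) / pochhammer c n) * c / (c + real n)"
    by (rule aux2) (use nz in auto)
  finally show ?thesis unfolding t_def .
qed

lemma t_tele: "c > 0 \<Longrightarrow> c*(c-1)*t c n - (c-1/2)^2 * t (c+1) n
    = (- c * real (Suc n) * t c (Suc n)) - (- c * real n * t c n)"
proof -
  assume c: "c > 0"
  have nz: "c + real n \<noteq> 0" "real n + 1 \<noteq> 0" using c by auto
  have "c*(c-1)*t c n - (c-1/2)^2 * t (c+1) n - ((- c * real (Suc n) * t c (Suc n)) - (- c * real n * t c n))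
     = c*(c-1)*t c n - (c-1/2)^2 * (t c n * c / (c + real n))
        - (- c * (real n + 1) * (t c n * (real n + 1/2)^2 / ((real n + 1) * (c + real n))) - (- c * real n * t c n))"
  proof -
    have rs: "real (Suc n) = real n + 1" by simp
    show ?thesis unfolding t_Suc[OF c] t_shift[OF c] rs ..
  qed
  also have "\<dots> = t c n * (c*(c-1)*(c + real n) - (c-1/2)^2*c + c*(real n + 1/2)^2 - c*real n*(c + real n)) / (c + real n)"
    by (rule aux3) (use nz in auto)
  also have "c*(c-1)*(c + real n) - (c-1/2)^2*c + c*(real n + 1/2)^2 - c*real n*(c + real n) = 0"
    by (simp add: algebra_simps power2_eq_square)
  finally show ?thesis by simp
qed

lemma t_partial: "c > 0 \<Longrightarrow> c*(c-1)*(\<Sum>n<N. t c n) - (c-1/2)^2*(\<Sum>n<N. t (c+1) n) = - c * real N * t c N"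
proof -
  assume c: "c > 0"
  have "c*(c-1)*(\<Sum>n<N. t c n) - (c-1/2)^2*(\<Sum>n<N. t (c+1) n)
      = (\<Sum>n<N. c*(c-1)*t c n - (c-1/2)^2 * t (c+1) n)"
    by (simp add: sum_distrib_left sum_subtractf)
  also have "\<dots> = (\<Sum>n<N. (- c * real (Suc n) * t c (Suc n)) - (- c * real n * t c n))"
    using t_tele[OF c] by simp
  also have "\<dots> = - c * real N * t c N"
    by (subst sum_lessThan_telescope[where f = "\<lambda>n. - c * real n * t c n"]) simp
  finally show ?thesis .
qed

lemma fact_poch_le: "c \<ge> 2 \<Longrightarrow> fact (Suc n) / pochhammer c (Suc n) \<le> 2 / (c * (real n + 2))"
proof (induction n)
  case 0 then show ?case by simp
next
  case (Suc n)
  have c: "c > 0" using Suc by simp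
  have pp: "pochhammer c (Suc n) > 0" by (rule poch_pos[OF c])
  have "fact (Suc (Suc n)) / pochhammer c (Suc (Suc n))
        = (fact (Suc n) / pochhammer c (Suc n)) * ((real n + 2) / (c + real n + 1))"
    unfolding fact_Suc[of "Suc n"] pochhammer_Suc[of c "Suc n"] using pp c
    by (simp add: field_simps)
  also have "\<dots> \<le> (2 / (c * (real n + 2))) * ((real n + 2) / (real n + 3))"
  proof (rule mult_mono)
    show "(real n + 2) / (c + real n + 1) \<le> (real n + 2) / (real n + 3)"
      using Suc.prems by (intro divide_left_mono) auto
  qed (use Suc in \<open>auto intro!: divide_nonneg_nonneg\<close>)
  also have "\<dots> = 2 / (c * (real (Suc n) + 2))"
  proof -
    have nz: "real n + 2 \<noteq> 0" "c \<noteq> 0" using c by auto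
    have "(2 / (c * (real n + 2))) * ((real n + 2) / (real n + 3)) = 2 / (c * (real n + 3))"
      by (rule aux4) (use nz in auto)
    moreover have "real (Suc n) + 2 = real n + 3" by simp
    ultimately show ?thesis by simp
  qed
  finally show ?case .
qed

definition K2 :: real where "K2 = (\<Sum>n. 1 / (real n + 1)^2)"

lemma t_bound: "c \<ge> 2 \<Longrightarrow> t c (Suc n) \<le> (4/c) * (1 / (real n + 1)^2)"
proof -
  assume c: "c \<ge> 2"
  have a: "A (Suc n) ^ 2 \<le> 2 / (real n + 2)" using A_sq_le[of "Suc n"] by (simp add: add.commute)
  have "t c (Suc n) = A (Suc n) ^ 2 * (fact (Suc n) / pochhammer c (Suc n))"
    unfolding t_def by simp
  also have "\<dots> \<le> (2 / (real n + 2)) * (2 / (c * (real n + 2)))"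
    using c by (intro mult_mono a fact_poch_le) (auto intro!: divide_nonneg_nonneg less_imp_le[OF poch_pos])
  also have "\<dots> = (4/c) * (1 / (real n + 2)^2)" using c by (simp add: field_simps power2_eq_square)
  also have "\<dots> \<le> (4/c) * (1 / (real n + 1)^2)"
    using c by (intro mult_left_mono divide_left_mono power_mono) auto
  finally show ?thesis .
qed

lemma summable_t2: "c \<ge> 2 \<Longrightarrow> summable (t c)"
proof -
  assume c: "c \<ge> 2"
  have "summable (\<lambda>n. (4/c) * (1 / (real n + 1)^2))"
    by (intro summable_mult summable_inv_sq_Suc)
  then have "summable (\<lambda>n. t c (Suc n))"
    by (rule summable_comparison_test'[where N=0]) (use c t_pos[of c] t_bound[OF c] in \<open>auto simp: less_imp_le\<close>)
  then show ?thesis by (subst (asm) summable_Suc_iff)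
qed

lemma F_bounds: "c \<ge> 2 \<Longrightarrow> 1 \<le> suminf (t c) \<and> suminf (t c) \<le> 1 + (4/c) * K2"
proof -
  assume c: "c \<ge> 2"
  have s: "summable (t c)" by (rule summable_t2[OF c])
  have s1: "summable (\<lambda>n. t c (Suc n))" using s by (subst summable_Suc_iff)
  have eq: "suminf (t c) = 1 + (\<Sum>n. t c (Suc n))" using suminf_split_head[OF s] by simp
  have "0 \<le> (\<Sum>n. t c (Suc n))" using t_pos[of c] c by (intro suminf_nonneg s1) (auto simp: less_imp_le)
  moreover have "(\<Sum>n. t c (Suc n)) \<le> (\<Sum>n. (4/c) * (1 / (real n + 1)^2))"
    using t_bound[OF c] by (intro suminf_le s1 summable_mult summable_inv_sq_Suc) auto
  moreover have "(\<Sum>n. (4/c) * (1 / (real n + 1)^2)) = (4/c) * K2"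
    unfolding K2_def by (rule suminf_mult[OF summable_inv_sq_Suc])
  ultimately show ?thesis using eq by simp
qed

lemma summable_t: "c > 1 \<Longrightarrow> summable (t c)"
proof -
  assume c: "c > 1"
  have s: "summable (t (c+1))" by (rule summable_t2) (use c in simp)
  show ?thesis
  proof (rule bounded_imp_summable)
    show "0 \<le> t c n" for n using t_pos[of c n] c by simp
    fix n
    have "c*(c-1)*(\<Sum>k<Suc n. t c k) = (c-1/2)^2*(\<Sum>k<Suc n. t (c+1) k) - c * real (Suc n) * t c (Suc n)"
      using t_partial[of c "Suc n"] c by simp
    also have "\<dots> \<le> (c-1/2)^2*(\<Sum>k<Suc n. t (c+1) k)"
      using t_pos[of c "Suc n"] c by simp
    also have "\<dots> \<le> (c-1/2)^2 * suminf (t (c+1))"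
      using t_pos[of "c+1"] c by (intro mult_left_mono sum_le_suminf s) (auto simp: less_imp_le)
    finally have "(\<Sum>k<Suc n. t c k) \<le> ((c-1/2)^2 * suminf (t (c+1))) / (c*(c-1))"
      using c by (simp add: pos_le_divide_eq mult_ac)
    then show "(\<Sum>k\<le>n. t c k) \<le> ((c-1/2)^2 * suminf (t (c+1))) / (c*(c-1))"
      by (simp add: lessThan_Suc_atMost)
  qed
qed

lemma F_rec: "c > 1 \<Longrightarrow> c*(c-1)* suminf (t c) = (c-1/2)^2 * suminf (t (c+1))"
proof -
  assume c: "c > 1"
  have s: "summable (t c)" by (rule summable_t[OF c])
  have s2: "summable (t (c+1))" by (rule summable_t) (use c in simp)
  let ?M = "c*(c-1)* suminf (t c) - (c-1/2)^2 * suminf (t (c+1))"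
  have "(\<lambda>N. c*(c-1)*(\<Sum>n<N. t c n) - (c-1/2)^2*(\<Sum>n<N. t (c+1) n)) \<longlonglongrightarrow> ?M"
    by (intro tendsto_intros summable_LIMSEQ s s2)
  then have "(\<lambda>N. - c * real N * t c N) \<longlonglongrightarrow> ?M" using t_partial[of c] c by simp
  then have "(\<lambda>N. (-1/c) * (- c * real N * t c N)) \<longlonglongrightarrow> (-1/c) * ?M" by (intro tendsto_intros)
  then have "(\<lambda>N. real N * t c N) \<longlonglongrightarrow> (-1/c) * ?M" using c by simp
  then have lim: "(\<lambda>n. real (Suc n) * t c (Suc n)) \<longlonglongrightarrow> (-1/c) * ?M" by (rule LIMSEQ_Suc)
  have "(-1/c) * ?M = 0"
  proof (rule lim_zero_of_summable[OF _ _ lim])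
    show "summable (\<lambda>n. t c (Suc n))" using s by (subst summable_Suc_iff)
    show "0 \<le> t c (Suc n)" for n using t_pos[of c] c by (simp add: less_imp_le)
  qed
  then show ?thesis using c by simp
qed

lemma F_iter: "c > 1 \<Longrightarrow> suminf (t c) = (\<Prod>k<m. (c+real k-1/2)^2/((c+real k)*(c+real k-1))) * suminf (t (c+real m))"
proof (induction m)
  case 0 then show ?case by simp
next
  case (Suc m)
  have d: "c + real m > 1" using Suc by simp
  have r: "(c+real m)*(c+real m-1)* suminf (t (c+real m)) = (c+real m-1/2)^2 * suminf (t (c+real m+1))"
    by (rule F_rec[OF d])
  have nz: "(c+real m)*(c+real m-1) \<noteq> 0" using d by simp
  have "suminf (t (c+real m)) = (c+real m-1/2)^2/((c+real m)*(c+real m-1)) * suminf (t (c+real m+1))"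
    using r nz by (simp add: field_simps)
  then show ?case using Suc by (simp add: algebra_simps)
qed

lemma prod_poch: "c > 1 \<Longrightarrow> (\<Prod>k<m. (c+real k-1/2)^2/((c+real k)*(c+real k-1)))
   = pochhammer (c-1/2) m ^ 2 / (pochhammer c m * pochhammer (c-1) m)"
proof (induction m)
  case 0 then show ?case by simp
next
  case (Suc m)
  have p1: "pochhammer c m \<noteq> 0" "pochhammer (c-1) m \<noteq> 0" using poch_pos[of c m] poch_pos[of "c-1" m] Suc by auto
  have p2: "c + real m \<noteq> 0" "c + real m - 1 \<noteq> 0" using Suc by auto
  have e: "c - 1 + real m = c + real m - 1" "c - 1/2 + real m = c + real m - 1/2" by simp_all
  show ?case unfolding prod.lessThan_Suc Suc.IH[OF Suc.prems] pochhammer_Suc e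
    using p1 p2 by (simp add: field_simps power2_eq_square)
qed

lemma aux7: "P \<noteq> 0 \<Longrightarrow> d \<noteq> 0 \<Longrightarrow> FE \<noteq> 0 \<Longrightarrow> G = FE/(P*d) \<Longrightarrow> P = FE/(d*(G::real))"
proof -
  assume a: "P \<noteq> 0" "d \<noteq> 0" "FE \<noteq> 0" "G = FE/(P*d)"
  then have "G \<noteq> 0" by simp
  with a show ?thesis by (simp add: field_simps mult_ac)
qed

lemma poch_GS: "z > 0 \<Longrightarrow> pochhammer z m = fact m * exp (z * ln (real m)) / ((z + real m) * Gamma_series z m)"
proof -
  assume z: "z > 0"
  have nz: "pochhammer z m \<noteq> 0" "z + real m \<noteq> 0" using poch_pos[OF z, of m] z by auto
  have g: "Gamma_series z m = fact m * exp (z * ln (real m)) / (pochhammer z m * (z + real m))"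
    unfolding Gamma_series_def by (simp add: pochhammer_Suc)
  have fe: "fact m * exp (z * ln (real m)) \<noteq> (0::real)" by simp
  show ?thesis by (rule aux7[OF nz fe g])
qed

lemma aux6: "(F::real) \<noteq> 0 \<Longrightarrow> E1 \<noteq> 0 \<Longrightarrow> E2 \<noteq> 0 \<Longrightarrow> d1 \<noteq> 0 \<Longrightarrow> d2 \<noteq> 0 \<Longrightarrow> d3 \<noteq> 0 \<Longrightarrow>
   G1 \<noteq> 0 \<Longrightarrow> G2 \<noteq> 0 \<Longrightarrow> G3 \<noteq> 0 \<Longrightarrow>
   (F^2*(E1*E2)/((d3*G3)^2)) / ((F*E1/(d1*G1))*(F*E2/(d2*G2))) = (G1*G2/G3^2) * (d1*d2/d3^2::real)"
  by (simp add: field_simps power2_eq_square)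

lemma prod_lim: "(c::real) > 1 \<Longrightarrow> (\<lambda>m. pochhammer (c-1/2) m ^ 2 / (pochhammer c m * pochhammer (c-1) m))
   \<longlonglongrightarrow> Gamma c * Gamma (c-1) / Gamma (c-1/2)^2"
proof -
  assume c: "c > 1"
  let ?G = "\<lambda>z m. Gamma_series z m"
  have GSpos: "Gamma_series z m > 0" if "z > 0" for z :: real and m
    unfolding Gamma_series_def using poch_pos[of z "m+1"] that by simp
  have ev: "eventually (\<lambda>m. (?G c m * ?G (c-1) m / ?G (c-1/2) m ^ 2) * ((c + real m)*(c - 1 + real m) / (c - 1/2 + real m)^2)
      = pochhammer (c-1/2) m ^ 2 / (pochhammer c m * pochhammer (c-1) m)) sequentially"
  proof (rule eventually_sequentiallyI[of 1])
    fix m :: nat assume m: "m \<ge> 1"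
    let ?E = "\<lambda>z. exp (z * ln (real m))"
    have E: "?E (c-1/2) ^ 2 = ?E c * ?E (c-1)"
      by (simp add: power2_eq_square exp_add[symmetric] algebra_simps)
    have "pochhammer (c-1/2) m ^ 2 = (fact m * ?E (c-1/2) / ((c-1/2 + real m) * ?G (c-1/2) m))^2"
      using poch_GS[of "c-1/2" m] c by simp
    also have "\<dots> = fact m ^ 2 * (?E c * ?E (c-1)) / (((c-1/2 + real m) * ?G (c-1/2) m))^2"
      by (simp add: power_divide power_mult_distrib E)
    finally have n: "pochhammer (c-1/2) m ^ 2 = fact m ^ 2 * (?E c * ?E (c-1)) / (((c-1/2 + real m) * ?G (c-1/2) m))^2" .
    have d1: "pochhammer c m = fact m * ?E c / ((c + real m) * ?G c m)" using poch_GS[of c m] c by simp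
    have d2: "pochhammer (c-1) m = fact m * ?E (c-1) / ((c - 1 + real m) * ?G (c-1) m)" using poch_GS[of "c-1" m] c by simp
    show "(?G c m * ?G (c-1) m / ?G (c-1/2) m ^ 2) * ((c + real m)*(c - 1 + real m) / (c - 1/2 + real m)^2)
      = pochhammer (c-1/2) m ^ 2 / (pochhammer c m * pochhammer (c-1) m)"
      unfolding n d1 d2
      by (rule aux6[symmetric]) (use c GSpos[of c m] GSpos[of "c-1" m] GSpos[of "c-1/2" m] in auto)
  qed
  have G3: "Gamma (c-1/2) > 0" using c by (intro Gamma_real_pos) simp
  have "(\<lambda>m. (?G c m * ?G (c-1) m / ?G (c-1/2) m ^ 2) * ((c + real m)*(c - 1 + real m) / (c - 1/2 + real m)^2))
      \<longlonglongrightarrow> (Gamma c * Gamma (c-1) / Gamma (c-1/2)^2) * 1"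
  proof (intro tendsto_intros)
    show "(\<lambda>m. (c + real m)*(c - 1 + real m) / (c - 1/2 + real m)^2) \<longlonglongrightarrow> 1" by real_asymp
  qed (use G3 in auto)
  then show ?thesis using Lim_transform_eventually[OF _ ev] by simp
qed

lemma F_lim1: "c > 1 \<Longrightarrow> (\<lambda>m. suminf (t (c + real m))) \<longlonglongrightarrow> 1"
proof (rule tendsto_sandwich[where f = "\<lambda>_. 1" and h = "\<lambda>m. 1 + (4/(c + real m)) * K2"])
  assume c: "c > 1"
  show "eventually (\<lambda>m. 1 \<le> suminf (t (c + real m))) sequentially"
    using F_bounds c by (intro eventually_sequentiallyI[of 1]) auto
  show "eventually (\<lambda>m. suminf (t (c + real m)) \<le> 1 + (4/(c + real m)) * K2) sequentially"
    using F_bounds c by (intro eventually_sequentiallyI[of 1]) auto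
  show "(\<lambda>m. 1 + (4/(c + real m)) * K2) \<longlonglongrightarrow> 1"
  proof -
    have "(\<lambda>m. 1 + (4/(c + real m)) * K2) \<longlonglongrightarrow> 1 + 0 * K2"
      by (intro tendsto_intros) real_asymp
    then show ?thesis by simp
  qed
qed simp

lemma Gauss: "c > 1 \<Longrightarrow> suminf (t c) = Gamma c * Gamma (c-1) / Gamma (c-1/2)^2"
proof -
  assume c: "c > 1"
  have "(\<lambda>m. (\<Prod>k<m. (c+real k-1/2)^2/((c+real k)*(c+real k-1))) * suminf (t (c+real m)))
        \<longlonglongrightarrow> (Gamma c * Gamma (c-1) / Gamma (c-1/2)^2) * 1"
    unfolding prod_poch[OF c] by (intro tendsto_mult prod_lim F_lim1 c)
  then have "(\<lambda>m. suminf (t c)) \<longlonglongrightarrow> Gamma c * Gamma (c-1) / Gamma (c-1/2)^2"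
    using F_iter[OF c] by simp
  then show ?thesis by (simp add: LIMSEQ_const_iff)
qed
lemma hderiv: "((\<lambda>e::real. Gamma (1+e)^2 / Gamma (1/2+e)^2) has_field_derivative (4*ln 2/pi)) (at 0)"
proof (rule DERIV_cong)
  have n1: "(1::real) + 0 \<notin> \<int>\<^sub>\<le>\<^sub>0" by simp
  have n2: "(1/2::real) + 0 \<notin> \<int>\<^sub>\<le>\<^sub>0"
    by (auto elim!: nonpos_Ints_cases)
  show "((\<lambda>e::real. Gamma (1+e)^2 / Gamma (1/2+e)^2) has_field_derivative
     ((2 * Gamma (1+0) * (Gamma (1+0) * Digamma (1+0) * 1)) * Gamma (1/2+0)^2
       - Gamma (1+0)^2 * (2 * Gamma (1/2+0) * (Gamma (1/2+0) * Digamma (1/2+0) * 1)))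
       / (Gamma (1/2+0)^2 * Gamma (1/2+0)^2)) (at 0)"
    by (intro derivative_eq_intros refl) (use n1 n2 Gamma_one_half_real in auto)
  show "((2 * Gamma (1+0) * (Gamma (1+0) * Digamma (1+0) * 1)) * Gamma (1/2+0)^2
       - Gamma (1+0)^2 * (2 * Gamma (1/2+0) * (Gamma (1/2+0) * Digamma (1/2+0) * 1)))
       / (Gamma (1/2+0)^2 * Gamma (1/2+0)^2) = (4*ln 2/pi :: real)"
  proof -
    have g: "Gamma (1/2::real) ^ 2 = pi" by (simp add: Gamma_one_half_real)
    have g4: "Gamma (1/2::real) ^ 2 * Gamma (1/2) ^ 2 = pi * pi" using g by simp
    have g3: "2 * Gamma (1/2::real) * (Gamma (1/2) * X) = 2 * pi * X" for X using g by (simp add: power2_eq_square algebra_simps)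
    have e: "(1::real)+0 = 1" "(1/2::real)+0 = 1/2" by simp_all
    have g5: "Gamma (1/2::real) * Gamma (1/2) = pi" using g by (simp add: power2_eq_square)
    show ?thesis unfolding e g4 g3 g by (simp add: Digamma_one_half field_simps g5)
  qed
qed

definition Sq :: "real \<Rightarrow> real" where "Sq e = (\<Sum>n. q n * p e n)"

lemma t_p: "t (1+e) n = A n ^ 2 * p e n" unfolding t_def p_def by simp

lemma Sq_formula:
  assumes e: "e > 0"
  shows "Sq e = 1 + 1/(pi*e) - suminf (t (1+e))"
proof -
  define a where "a n = (if n = 0 then 0 else p e n / (pi * real n))" for n
  have sa: "a sums (1/(pi*e))"
  proof -
    have "(\<lambda>n. (1/pi) * (p e (Suc n) / real (Suc n))) sums ((1/pi) * (1/e))"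
      by (intro sums_mult p_harm_sums e)
    then have "(\<lambda>n. a (Suc n)) sums (1/(pi*e))" by (simp add: a_def)
    then show ?thesis by (subst (asm) sums_Suc_iff) (simp add: a_def)
  qed
  have sb: "t (1+e) sums suminf (t (1+e))" by (rule summable_sums, rule summable_t) (use e in simp)
  have si: "(\<lambda>n. if n = 0 then (1::real) else 0) sums 1"
    using sums_single[of 0 "\<lambda>_. 1::real"] by simp
  have "(\<lambda>n. a n - t (1+e) n + (if n = 0 then 1 else 0)) sums (1/(pi*e) - suminf (t (1+e)) + 1)"
    by (intro sums_add sums_diff sa sb si)
  moreover have "(\<lambda>n. a n - t (1+e) n + (if n = 0 then 1 else 0)) = (\<lambda>n. q n * p e n)"
    by (rule ext) (simp add: a_def q_def t_p algebra_simps)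
  ultimately have "(\<lambda>n. q n * p e n) sums (1/(pi*e) - suminf (t (1+e)) + 1)" by simp
  then show ?thesis unfolding Sq_def by (simp add: sums_iff)
qed

lemma G_formula:
  assumes e: "e > 0"
  shows "suminf (t (1+e)) = (Gamma (1+e)^2 / Gamma (1/2+e)^2) / e"
proof -
  have "suminf (t (1+e)) = Gamma (1+e) * Gamma (1+e-1) / Gamma (1+e-1/2)^2"
    by (rule Gauss) (use e in simp)
  also have "e \<notin> \<int>\<^sub>\<le>\<^sub>0" using e nonpos_Ints_nonpos[of e] by auto
  then have "Gamma (1+e) = e * Gamma e" using Gamma_plus1[of e] by (simp add: add.commute)
  moreover have "1 + e - 1/2 = 1/2 + e" by simp
  ultimately show ?thesis using e by (simp add: power2_eq_square field_simps)
qed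

lemma p_cont: "continuous_on {0..1} (\<lambda>e. p e n)"
proof -
  have "continuous_on {0..1} (\<lambda>e::real. fact n / (\<Prod>i=0..<n. (1+e) + of_nat i))"
    by (intro continuous_intros) (auto simp: prod_zero_iff)
  then show ?thesis unfolding p_def pochhammer_prod .
qed

lemma Sq_cont: "continuous_on {0..1} Sq"
proof -
  have "uniform_limit {0..1} (\<lambda>N e. \<Sum>n<N. q n * p e n) (\<lambda>e. \<Sum>n. q n * p e n) sequentially"
  proof (rule Weierstrass_m_test)
    show "summable q" by (rule summable_q)
    fix n and e :: real assume "e \<in> {0..1}"
    then have "0 < p e n" "p e n \<le> 1" using p_pos[of e n] p_le1[of e n] by auto
    then show "norm (q n * p e n) \<le> q n"
      using q_nonneg[of n] by (simp add: abs_mult mult_left_le)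
  qed
  then have "continuous_on {0..1} (\<lambda>e. \<Sum>n. q n * p e n)"
    by (rule uniform_limit_theorem[rotated]) (auto intro!: always_eventually continuous_intros p_cont)
  then show ?thesis unfolding Sq_def[abs_def] .
qed

lemma Sq_0: "Sq 0 = suminf q" unfolding Sq_def by simp

lemma suminf_q: "suminf q = 1 - 4 * ln 2 / pi"
proof -
  have l1: "(Sq \<longlongrightarrow> suminf q) (at_right 0)"
    using continuous_on_Icc_at_rightD[OF Sq_cont] Sq_0 by simp
  define h where "h e = Gamma (1+e)^2 / Gamma (1/2+e)^2" for e :: real
  have h0: "h 0 = 1/pi" unfolding h_def by (simp add: Gamma_one_half_real)
  have "((\<lambda>e. (h e - h 0) / (e - 0)) \<longlongrightarrow> 4*ln 2/pi) (at 0 within {0<..})"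
    using has_field_derivative_at_within[OF hderiv] unfolding h_def[abs_def]
    by (simp add: has_field_derivative_iff)
  then have l2: "((\<lambda>e. 1 - (h e - h 0) / (e - 0)) \<longlongrightarrow> 1 - 4*ln 2/pi) (at_right 0)"
    by (rule tendsto_diff[OF tendsto_const])
  have ev: "eventually (\<lambda>e. 1 - (h e - h 0) / (e - 0) = Sq e) (at_right 0)"
    using eventually_at_right_real[of "0::real" 1, OF zero_less_one]
  proof (rule eventually_mono)
    fix e :: real assume "e \<in> {0<..<1}"
    then have e: "0 < e" by simp
    have "Sq e = 1 + 1/(pi*e) - h e / e" using Sq_formula[of e] G_formula[of e] e unfolding h_def by simp
    also have "\<dots> = 1 - (h e - h 0) / (e - 0)" using e h0 by (simp add: field_simps)
    finally show "1 - (h e - h 0) / (e - 0) = Sq e" by simp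
  qed
  have "(Sq \<longlongrightarrow> 1 - 4*ln 2/pi) (at_right 0)"
    using Lim_transform_eventually[OF l2 ev] .
  then show ?thesis using l1 tendsto_unique[of "at_right (0::real)"] by (metis trivial_limit_at_right_real)
qed


definition PS :: "(nat \<Rightarrow> real) \<Rightarrow> real \<Rightarrow> real" where "PS c x = (\<Sum>n. c n * x ^ n)"
definition f1 :: "nat \<Rightarrow> real" where "f1 n = A n ^ 2"
definition f2 :: "nat \<Rightarrow> real" where "f2 n = A n ^ 2 / (real n + 1)"
definition f3 :: "nat \<Rightarrow> real" where "f3 n = 8 * (real n + 1) * A (Suc n) ^ 2 / (real n + 2)"
definition ee :: "nat \<Rightarrow> real" where "ee n = 9/8 * A n ^ 2 / ((real n + 1) * (real n + 2))"

lemma A_le1: "A n \<le> 1"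
proof (induction n)
  case (Suc n)
  have "A (Suc n) = A n * ((real n + 1/2) / (real n + 1))" by (simp add: A_Suc)
  also have "\<dots> \<le> 1 * 1" using Suc A_pos[of n] by (intro mult_mono) auto
  finally show ?case by simp
qed simp

lemma hyp_f1: "hyp2F1 (1/2) (1/2) 1 x = PS f1 x"
proof -
  have "pochhammer (1/2) n * pochhammer (1/2) n / (pochhammer 1 n * fact n) = f1 n" for n
    by (simp add: f1_def A_def pochhammer_fact[symmetric] power2_eq_square)
  then show ?thesis unfolding hyp2F1_def PS_def by simp
qed

lemma hyp_f2: "hyp2F1 (1/2) (1/2) 2 x = PS f2 x"
proof -
  have "pochhammer (1/2) n * pochhammer (1/2) n / (pochhammer 2 n * fact n) = f2 n" for n
  proof -
    have p2: "pochhammer 2 n = (fact (Suc n) :: real)"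
      using pochhammer_rec[of "1::real" n] pochhammer_fact[of "Suc n", where 'a=real] by simp
    have fs: "fact (Suc n) = (real n + 1) * (fact n :: real)" by (simp add: algebra_simps)
    have nz: "fact n \<noteq> (0::real)" "real n + 1 \<noteq> 0" by auto
    show ?thesis unfolding p2 fs f2_def A_def using nz by (simp add: field_simps power2_eq_square)
  qed
  then show ?thesis unfolding hyp2F1_def PS_def by simp
qed

lemma aux8: "f \<noteq> 0 \<Longrightarrow> m1 \<noteq> 0 \<Longrightarrow> m2 \<noteq> 0 \<Longrightarrow>
  2 * (a * (m1 * f)) * (2 * (a * (m1 * f))) / (m2 * m1 * f / 2 * f) = 8 * m1 * a^2 / (m2::real)"
  by (simp add: field_simps power2_eq_square)

lemma hyp_f3: "hyp2F1 (3/2) (3/2) 3 x = PS f3 x"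
proof -
  have "pochhammer (3/2) n * pochhammer (3/2) n / (pochhammer 3 n * fact n) = f3 n" for n
  proof -
    have p32: "pochhammer (3/2::real) n = 2 * pochhammer (1/2::real) (Suc n)"
      using pochhammer_rec[of "1/2::real" n] by simp
    have p3: "pochhammer (3::real) n = (fact (Suc (Suc n)) :: real) / 2"
      using pochhammer_rec[of "1::real" "Suc n"] pochhammer_rec[of "2::real" n] pochhammer_fact[of "Suc (Suc n)", where 'a=real]
      by (simp add: numeral_2_eq_2 algebra_simps)
    have AS: "pochhammer (1/2) (Suc n) = A (Suc n) * fact (Suc n)" by (simp add: A_def)
    have fs1: "fact (Suc n) = (real n + 1) * (fact n :: real)" by (simp add: algebra_simps)
    have fs2: "fact (Suc (Suc n)) = (real n + 2) * (real n + 1) * (fact n :: real)"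
      by (simp add: algebra_simps)
    have nz: "fact n \<noteq> (0::real)" "real n + 1 \<noteq> 0" "real n + 2 \<noteq> 0" by auto
    show ?thesis unfolding p32 p3 AS fs2 fs1 f3_def
      by (rule aux8) (use nz in auto)
  qed
  then show ?thesis unfolding hyp2F1_def PS_def by simp
qed

lemma summable_bdd:
  fixes c :: "nat \<Rightarrow> real" and x :: real
  assumes "\<And>n. \<bar>c n\<bar> \<le> M" "\<bar>x\<bar> < 1"
  shows "summable (\<lambda>n. c n * x ^ n)"
proof (rule summable_comparison_test[OF _ summable_mult[OF summable_geometric[of "\<bar>x\<bar>"]]])
  show "\<exists>N. \<forall>n\<ge>N. norm (c n * x ^ n) \<le> M * \<bar>x\<bar> ^ n"
    using assms(1) by (intro exI[of _ 0]) (auto simp: abs_mult power_abs intro!: mult_right_mono)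
qed (use assms in simp)

lemma isCont_PS:
  fixes c :: "nat \<Rightarrow> real" and x :: real
  assumes "\<And>n. \<bar>c n\<bar> \<le> M" "\<bar>x\<bar> < 1"
  shows "isCont (PS c) x"
proof -
  let ?K = "(1 + \<bar>x\<bar>)/2"
  have "summable (\<lambda>n. c n * ?K ^ n)" by (rule summable_bdd[OF assms(1)]) (use assms in auto)
  moreover have "norm x < norm ?K" using assms by auto
  ultimately have "isCont (\<lambda>x. \<Sum>n. c n * x ^ n) x" by (rule isCont_powser)
  then show ?thesis unfolding PS_def[abs_def] .
qed

lemma PS_cont01:
  assumes "\<And>n. 0 \<le> c n" "summable c"
  shows "continuous_on {0..1} (PS c)"
proof -
  have "uniform_limit {0..1} (\<lambda>N x. \<Sum>n<N. c n * x ^ n) (\<lambda>x. \<Sum>n. c n * x ^ n) sequentially"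
  proof (rule Weierstrass_m_test[OF _ assms(2)])
    fix n and x :: real assume "x \<in> {0..1}"
    then have "x ^ n \<le> 1" "0 \<le> x ^ n" by (auto intro: power_le_one)
    then show "norm (c n * x ^ n) \<le> c n" using assms(1)[of n] by (simp add: abs_mult mult_left_le)
  qed
  then have "continuous_on {0..1} (\<lambda>x. \<Sum>n. c n * x ^ n)"
    by (rule uniform_limit_theorem[rotated]) (auto intro!: always_eventually continuous_intros)
  then show ?thesis unfolding PS_def[abs_def] .
qed

lemma PS_at1: "PS c 1 = suminf c" unfolding PS_def by simp

lemma PS_lim1:
  assumes "\<And>n. 0 \<le> c n" "summable c"
  shows "(PS c \<longlongrightarrow> suminf c) (at_left 1)"
  using continuous_on_Icc_at_leftD[OF PS_cont01[OF assms] zero_less_one] PS_at1 by simp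

lemma PS_sums:
  fixes c :: "nat \<Rightarrow> real" and x :: real
  assumes "\<And>n. \<bar>c n\<bar> \<le> M" "\<bar>x\<bar> < 1"
  shows "(\<lambda>n. c n * x ^ n) sums PS c x"
  unfolding PS_def by (rule summable_sums, rule summable_bdd[OF assms])

lemma f1_bdd: "\<bar>f1 n\<bar> \<le> 1" unfolding f1_def using A_le1[of n] A_pos[of n]
  by (simp add: power_le_one abs_le_iff)

lemma A1: "A 1 = 1/2" using A_Suc[of 0] by simp
lemma A1': "A (Suc 0) = 1/2" using A_Suc[of 0] by simp

lemma f2_bdd: "\<bar>f2 n\<bar> \<le> 1"
proof -
  have "A n ^ 2 \<le> 1" using A_le1[of n] A_pos[of n] by (simp add: power_le_one)
  moreover have "A n ^ 2 / (real n + 1) \<le> A n ^ 2 / 1" by (rule divide_left_mono) auto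
  ultimately show ?thesis unfolding f2_def by simp
qed

lemma f3_bdd: "\<bar>f3 n\<bar> \<le> 8"
proof -
  have a: "A (Suc n) ^ 2 \<le> 1" using A_le1[of "Suc n"] A_pos[of "Suc n"] by (simp add: power_le_one)
  have "f3 n = 8 * A (Suc n) ^ 2 * ((real n + 1) / (real n + 2))" unfolding f3_def by simp
  also have "\<dots> \<le> 8 * 1 * 1" by (intro mult_mono a) auto
  finally show ?thesis using A_pos[of "Suc n"] unfolding f3_def by simp
qed

lemma ee_pos: "ee n > 0" unfolding ee_def using A_pos[of n] by simp

lemma ee_bdd: "\<bar>ee n\<bar> \<le> 1"
proof -
  have a: "A n ^ 2 \<le> 1" using A_le1[of n] A_pos[of n] by (simp add: power_le_one)
  have "ee n = 9/8 * A n ^ 2 / ((real n + 1) * (real n + 2))" by (simp add: ee_def)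
  also have "\<dots> \<le> 9/8 * A n ^ 2 / 2"
  proof (intro divide_left_mono)
    have "1 \<le> real n + 1" "2 \<le> real n + 2" by auto
    then have "1 * 2 \<le> (real n + 1) * (real n + 2)" by (intro mult_mono) auto
    then show "2 \<le> (real n + 1) * (real n + 2)" by simp
    show "0 < (real n + 1) * (real n + 2) * 2" by simp
  qed simp
  also have "\<dots> \<le> 1" using a by simp
  finally show ?thesis using ee_pos[of n] by simp
qed

lemma aux9: "a > 0 \<Longrightarrow>
   (1/16)*(8*a*(Y*(a-1/2)/a)^2/(a+1) - 8*(a-1)*Y^2/a) + (1/2)*(Y^2/a) = 9/8*Y^2/(a*((a+1)::real))"
  by (simp add: divide_simps) (simp add: algebra_simps power2_eq_square)

lemma ee_coeff: "(1/16) * (f3 n - (if n = 0 then 0 else f3 (n - 1))) + (1/2) * f2 n = ee n"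
proof (cases n)
  case 0 then show ?thesis by (simp add: f3_def f2_def ee_def A1' power2_eq_square)
next
  case (Suc m)
  have e1: "A (Suc (Suc m)) = A (Suc m) * ((real m + 2) - 1/2) / (real m + 2)"
    using A_Suc[of "Suc m"] by (simp add: algebra_simps)
  have "(1/16) * (f3 (Suc m) - f3 m) + (1/2) * f2 (Suc m)
      = (1/16)*(8*(real m+2)*(A (Suc m)*((real m + 2)-1/2)/(real m+2))^2/((real m+2)+1) - 8*((real m+2)-1)*A (Suc m)^2/(real m+2)) + (1/2)*(A (Suc m)^2/(real m+2))"
    unfolding f3_def f2_def e1 by (simp add: algebra_simps)
  also have "\<dots> = 9/8*A (Suc m)^2/((real m+2)*((real m+2)+1))" by (rule aux9) simp
  also have "\<dots> = ee (Suc m)" unfolding ee_def by (simp add: algebra_simps)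
  finally show ?thesis using Suc by simp
qed

lemma u_PS: "\<bar>x\<bar> < 1 \<Longrightarrow> u_fun x = PS ee x"
proof -
  assume x: "\<bar>x\<bar> < 1"
  define g where "g n = (if n = 0 then 0 else f3 (n - 1))" for n
  have S3: "(\<lambda>n. f3 n * x ^ n) sums PS f3 x" by (rule PS_sums[OF f3_bdd x])
  have S2: "(\<lambda>n. f2 n * x ^ n) sums PS f2 x" by (rule PS_sums[OF f2_bdd x])
  have "(\<lambda>n. x * (f3 n * x ^ n)) sums (x * PS f3 x)" by (rule sums_mult[OF S3])
  then have "(\<lambda>n. g (Suc n) * x ^ (Suc n)) sums (x * PS f3 x)" by (simp add: g_def algebra_simps)
  then have Sg: "(\<lambda>n. g n * x ^ n) sums (x * PS f3 x)" by (subst (asm) sums_Suc_iff) (simp add: g_def)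
  have "(\<lambda>n. (1/16) * (f3 n * x ^ n - g n * x ^ n) + (1/2) * (f2 n * x ^ n))
        sums ((1/16) * (PS f3 x - x * PS f3 x) + (1/2) * PS f2 x)"
    by (intro sums_add sums_mult sums_diff S3 Sg S2)
  moreover have "(\<lambda>n. (1/16) * (f3 n * x ^ n - g n * x ^ n) + (1/2) * (f2 n * x ^ n)) = (\<lambda>n. ee n * x ^ n)"
  proof
    fix n
    have "(1/16) * (f3 n * x ^ n - g n * x ^ n) + (1/2) * (f2 n * x ^ n)
        = ((1/16) * (f3 n - g n) + (1/2) * f2 n) * x ^ n" by (simp add: field_simps)
    also have "\<dots> = ee n * x ^ n" using ee_coeff[of n] unfolding g_def by simp
    finally show "(1/16) * (f3 n * x ^ n - g n * x ^ n) + (1/2) * (f2 n * x ^ n) = ee n * x ^ n" .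
  qed
  ultimately have "(\<lambda>n. ee n * x ^ n) sums ((1/16) * (PS f3 x - x * PS f3 x) + (1/2) * PS f2 x)" by simp
  moreover have "(\<lambda>n. ee n * x ^ n) sums PS ee x" by (rule PS_sums[OF ee_bdd x])
  ultimately have "PS ee x = (1/16) * (PS f3 x - x * PS f3 x) + (1/2) * PS f2 x" using sums_unique2 by blast
  then show ?thesis unfolding u_fun_def hyp_f3 hyp_f2 by (simp add: field_simps)
qed

lemma aux10: "a > 0 \<Longrightarrow>
   (a-1)*(4*(a-1)+5)/(2*a) * X + 9/8*X/(a*(a+1)) = a*(4*a+5)/(2*(a+1)) * (X*((a-1/2)/a)^2::real)"
  by (simp add: divide_simps) (simp add: algebra_simps power2_eq_square)

lemma aux11: "a \<noteq> 0 \<Longrightarrow> 4*(a-1)*X + X/a = 4*a*(X*((a-1/2)/(a::real))^2)"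
  by (simp add: divide_simps) (simp add: algebra_simps power2_eq_square)

lemma A_Suc_sq: "A (Suc N) ^ 2 = A N ^ 2 * ((real N + 1 - 1/2)/(real N + 1))^2"
proof -
  have eq: "A (Suc N) = A N * ((real N + 1 - 1/2)/(real N + 1))" by (simp add: A_Suc)
  show ?thesis unfolding eq by (rule power_mult_distrib)
qed

lemma ee_partial: "(\<Sum>n<N. ee n) = real N*(4*real N+5)/(2*(real N+1)) * A N ^ 2"
proof (induction N)
  case 0 then show ?case by simp
next
  case (Suc N)
  have "(\<Sum>n<Suc N. ee n) = ((real N+1)-1)*(4*((real N+1)-1)+5)/(2*(real N+1)) * A N ^ 2 + 9/8*A N^2/((real N+1)*((real N+1)+1))"
    using Suc by (simp add: ee_def algebra_simps)
  also have "\<dots> = (real N+1)*(4*(real N+1)+5)/(2*((real N+1)+1)) * (A N ^ 2 * (((real N+1)-1/2)/(real N+1))^2)"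
    by (rule aux10) simp
  also have "\<dots> = real (Suc N)*(4*real (Suc N)+5)/(2*(real (Suc N)+1)) * A (Suc N) ^ 2"
    unfolding A_Suc_sq by simp
  finally show ?case .
qed

lemma sum_ee: "ee sums (2/pi)"
proof -
  have "(\<lambda>N. ((4*real N+5)/(2*(real N+1))) * (real N * A N ^ 2)) \<longlonglongrightarrow> 2 * (1/pi)"
    by (intro tendsto_mult nA_lim) real_asymp
  moreover have "(\<lambda>N. ((4*real N+5)/(2*(real N+1))) * (real N * A N ^ 2)) = (\<lambda>N. \<Sum>n<N. ee n)"
    by (rule ext) (simp add: ee_partial algebra_simps)
  ultimately show ?thesis unfolding sums_def by simp
qed

lemma f2_partial: "(\<Sum>n<N. f2 n) = 4 * real N * A N ^ 2"
proof (induction N)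
  case 0 then show ?case by simp
next
  case (Suc N)
  have nz: "real N + 1 \<noteq> 0" by simp
  have "(\<Sum>n<Suc N. f2 n) = 4 * ((real N + 1) - 1) * A N ^ 2 + A N ^ 2 / (real N + 1)"
    using Suc by (simp add: f2_def)
  also have "\<dots> = 4 * (real N + 1) * (A N ^ 2 * (((real N + 1) - 1/2) / (real N + 1))^2)"
    by (rule aux11) (use nz in auto)
  also have "\<dots> = 4 * real (Suc N) * A (Suc N) ^ 2"
    unfolding A_Suc_sq by simp
  finally show ?case .
qed

lemma sum_f2: "f2 sums (4/pi)"
proof -
  have "(\<lambda>N. 4 * (real N * A N ^ 2)) \<longlonglongrightarrow> 4 * (1/pi)"
    by (intro tendsto_mult nA_lim tendsto_const)
  then show ?thesis unfolding sums_def f2_partial by (simp add: algebra_simps)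
qed


lemma PS_ge0:
  fixes c :: "nat \<Rightarrow> real"
  assumes "\<And>n. 0 \<le> c n" "\<And>n. \<bar>c n\<bar> \<le> M" "0 \<le> x" "x < 1"
  shows "c 0 \<le> PS c x"
proof -
  have s: "(\<lambda>n. c n * x ^ n) sums PS c x" by (rule PS_sums[OF assms(2)]) (use assms in auto)
  have sm: "summable (\<lambda>n. c n * x ^ n)" using s by (rule sums_summable)
  have "(\<Sum>n<1. c n * x ^ n) \<le> (\<Sum>n. c n * x ^ n)"
    by (rule sum_le_suminf[OF sm]) (use assms in auto)
  then show ?thesis using s by (simp add: sums_iff)
qed

lemma PS_strict:
  fixes c :: "nat \<Rightarrow> real"
  assumes "\<And>n. 0 \<le> c n" "\<And>n. \<bar>c n\<bar> \<le> M" "c 1 > 0" "0 \<le> x" "x < y" "y < 1"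
  shows "PS c x < PS c y"
proof -
  have sx: "(\<lambda>n. c n * x ^ n) sums PS c x" by (rule PS_sums[OF assms(2)]) (use assms in auto)
  have sy: "(\<lambda>n. c n * y ^ n) sums PS c y" by (rule PS_sums[OF assms(2)]) (use assms in auto)
  have d: "(\<lambda>n. c n * y ^ n - c n * x ^ n) sums (PS c y - PS c x)" by (rule sums_diff[OF sy sx])
  have "0 < (\<Sum>n. c n * y ^ n - c n * x ^ n)"
  proof (rule suminf_pos2[where i=1])
    show "summable (\<lambda>n. c n * y ^ n - c n * x ^ n)" using d by (rule sums_summable)
    show "0 \<le> c n * y ^ n - c n * x ^ n" for n
      using assms by (auto intro!: mult_left_mono power_mono)
    show "0 < c 1 * y ^ 1 - c 1 * x ^ 1" using assms by simp
  qed
  then show ?thesis using d by (simp add: sums_iff)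
qed

lemma PS_lt_sum:
  fixes c :: "nat \<Rightarrow> real"
  assumes "\<And>n. 0 \<le> c n" "\<And>n. \<bar>c n\<bar> \<le> M" "c 1 > 0" "0 \<le> x" "x < 1" "summable c"
  shows "PS c x < suminf c"
proof -
  have sx: "(\<lambda>n. c n * x ^ n) sums PS c x" by (rule PS_sums[OF assms(2)]) (use assms in auto)
  have d: "(\<lambda>n. c n - c n * x ^ n) sums (suminf c - PS c x)"
    by (rule sums_diff[OF summable_sums[OF assms(6)] sx])
  have "0 < (\<Sum>n. c n - c n * x ^ n)"
  proof (rule suminf_pos2[where i=1])
    show "summable (\<lambda>n. c n - c n * x ^ n)" using d by (rule sums_summable)
    show "0 \<le> c n - c n * x ^ n" for n
    proof -
      have "x ^ n \<le> 1" using assms by (auto intro: power_le_one)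
      then have "c n * x ^ n \<le> c n * 1" using assms(1)[of n] by (intro mult_left_mono) auto
      then show ?thesis by simp
    qed
    show "0 < c 1 - c 1 * x ^ 1" using assms by simp
  qed
  then show ?thesis using d by (simp add: sums_iff)
qed

lemma u_eq: "0 \<le> x \<Longrightarrow> x < 1 \<Longrightarrow> u_fun x = PS ee x"
  by (rule u_PS) simp

lemma ee0: "ee 0 = 9/16" by (simp add: ee_def)
lemma ee1: "ee 1 > 0" using ee_pos by simp

lemma u_strict: "0 \<le> x \<Longrightarrow> x < y \<Longrightarrow> y < 1 \<Longrightarrow> u_fun x < u_fun y"
proof -
  assume a: "0 \<le> x" "x < y" "y < 1"
  have "PS ee x < PS ee y" by (rule PS_strict[where M=1]) (use a ee_pos ee_bdd ee1 in \<open>auto simp: less_imp_le\<close>)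
  then show ?thesis using a u_eq[of x] u_eq[of y] by simp
qed

lemma u_0: "u_fun 0 = 9/16"
  using u_eq[of 0] ee0 unfolding PS_def by simp

lemma u_lt: "0 \<le> x \<Longrightarrow> x < 1 \<Longrightarrow> u_fun x < 2/pi"
proof -
  assume a: "0 \<le> x" "x < 1"
  have "PS ee x < suminf ee" by (rule PS_lt_sum[where M=1]) (use a ee_pos ee_bdd ee1 sum_ee in \<open>auto simp: less_imp_le sums_iff\<close>)
  then show ?thesis using a u_eq[of x] sum_ee by (simp add: sums_iff)
qed

lemma u_ge: "0 \<le> x \<Longrightarrow> x < 1 \<Longrightarrow> 9/16 \<le> u_fun x"
  using u_strict[of 0 x] u_0 by (cases "x = 0") auto

lemma ee_cont: "continuous_on {0..1} (PS ee)"
  using PS_cont01[of ee] ee_pos sum_ee by (simp add: less_imp_le sums_iff)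

lemma u_lim: "(u_fun \<longlongrightarrow> 2/pi) (at_left 1)"
proof -
  have "(PS ee \<longlongrightarrow> 2/pi) (at_left 1)"
    using PS_lim1[of ee] ee_pos sum_ee by (simp add: less_imp_le sums_iff)
  moreover have "eventually (\<lambda>x. PS ee x = u_fun x) (at_left 1)"
    using eventually_at_left_real[of 0 "1::real", OF zero_less_one] by eventually_elim (simp add: u_eq)
  ultimately show ?thesis by (rule Lim_transform_eventually)
qed

lemma exists_near1:
  assumes "eventually P (at_left (1::real))"
  shows "\<exists>t. 0 < t \<and> t < 1 \<and> P t"
proof -
  have "eventually (\<lambda>x. P x \<and> x \<in> {0<..<1}) (at_left (1::real))"
    using assms eventually_at_left_real[of 0 "1::real", OF zero_less_one] by eventually_elim auto
  then show ?thesis using eventually_happens'[of "at_left (1::real)"] by force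
qed

lemma u_image: "u_fun ` {0..<1} = {9/16..<2/pi}"
proof
  show "u_fun ` {0..<1} \<subseteq> {9/16..<2/pi}" using u_ge u_lt by auto
  show "{9/16..<2/pi} \<subseteq> u_fun ` {0..<1}"
  proof
    fix y assume y: "y \<in> {9/16..<2/pi}"
    have "eventually (\<lambda>x. y < u_fun x) (at_left 1)"
      using order_tendstoD(1)[OF u_lim] y by simp
    then obtain t where t: "0 < t" "t < 1" "y < u_fun t" using exists_near1 by blast
    have "continuous_on {0..t} (PS ee)" by (rule continuous_on_subset[OF ee_cont]) (use t in auto)
    moreover have "PS ee 0 \<le> y" using u_0 u_eq[of 0] y by simp
    moreover have "y \<le> PS ee t" using t u_eq[of t] by simp
    ultimately obtain x where x: "0 \<le> x" "x \<le> t" "PS ee x = y"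
      using IVT'[of "PS ee" 0 y t] t by auto
    then have "u_fun x = y" using u_eq[of x] t by simp
    then show "y \<in> u_fun ` {0..<1}" using x t by force
  qed
qed

lemma u_part: "strict_mono_on {0..<1} u_fun \<and> u_fun ` {0..<1} = {9/16..<2/pi}"
  using u_image u_strict by (auto simp: strict_mono_on_def)

lemma q_bdd: "\<bar>q n\<bar> \<le> 1"
proof -
  have "q n \<le> inverse (real n ^ 2)" by (rule q_le)
  also have "\<dots> \<le> 1" by (cases n) (auto simp: field_simps)
  finally show ?thesis using q_nonneg[of n] by simp
qed

lemma f1_nonneg: "0 \<le> f1 n" by (simp add: f1_def)
lemma f2_nonneg: "0 \<le> f2 n" by (simp add: f2_def)

lemma K_eq:
  assumes "0 \<le> x" "x < 1"
  shows "PS f1 x + ln (1 - x) / pi = 1 - PS q x"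
proof -
  have x: "\<bar>x\<bar> < 1" using assms by simp
  have "(\<lambda>n. - ((- (-x)) ^ n) / of_nat n) sums ln (1 + (-x))" by (rule ln_series') (use x in simp)
  then have L: "(\<lambda>n. x ^ n / real n) sums (- ln (1 - x))"
    using sums_minus by fastforce
  have S1: "(\<lambda>n. f1 n * x ^ n) sums PS f1 x" by (rule PS_sums[OF f1_bdd x])
  have Sq: "(\<lambda>n. q n * x ^ n) sums PS q x" by (rule PS_sums[OF q_bdd x])
  have si: "(\<lambda>n. if n = 0 then (1::real) else 0) sums 1"
    using sums_single[of 0 "\<lambda>_. 1::real"] by simp
  have "(\<lambda>n. (1/pi) * (x ^ n / real n) - f1 n * x ^ n + (if n = 0 then 1 else 0)) sums ((1/pi) * (- ln (1 - x)) - PS f1 x + 1)"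
    by (intro sums_add sums_diff sums_mult L S1 si)
  moreover have "(\<lambda>n. (1/pi) * (x ^ n / real n) - f1 n * x ^ n + (if n = 0 then 1 else 0)) = (\<lambda>n. q n * x ^ n)"
    by (rule ext) (simp add: q_def f1_def field_simps)
  ultimately have "PS q x = (1/pi) * (- ln (1 - x)) - PS f1 x + 1" using Sq sums_unique2 by force
  then show ?thesis by (simp add: field_simps)
qed

lemma K_lim: "((\<lambda>x. PS f1 x + ln (1 - x) / pi) \<longlongrightarrow> 4 * ln 2 / pi) (at_left 1)"
proof -
  have "(PS q \<longlongrightarrow> suminf q) (at_left 1)" by (rule PS_lim1[OF q_nonneg summable_q])
  then have "((\<lambda>x. 1 - PS q x) \<longlongrightarrow> 1 - suminf q) (at_left 1)" by (intro tendsto_intros)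
  then have "((\<lambda>x. 1 - PS q x) \<longlongrightarrow> 4 * ln 2 / pi) (at_left 1)" by (simp add: suminf_q)
  moreover have "eventually (\<lambda>x. 1 - PS q x = PS f1 x + ln (1 - x) / pi) (at_left 1)"
    using eventually_at_left_real[of 0 "1::real", OF zero_less_one] by eventually_elim (simp add: K_eq)
  ultimately show ?thesis by (rule Lim_transform_eventually)
qed

lemma PS_q_nonneg: "0 \<le> x \<Longrightarrow> x < 1 \<Longrightarrow> 0 \<le> PS q x"
proof -
  assume a: "0 \<le> x" "x < 1"
  have "q 0 \<le> PS q x" by (rule PS_ge0[where M=1]) (use a q_nonneg q_bdd in auto)
  then show ?thesis by (simp add: q_def)
qed

lemma F1_upper: "0 \<le> x \<Longrightarrow> x < 1 \<Longrightarrow> PS f1 x \<le> 1 - ln (1 - x) / pi"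
  using K_eq[of x] PS_q_nonneg[of x] by simp

lemma F1_ge1: "0 \<le> x \<Longrightarrow> x < 1 \<Longrightarrow> 1 \<le> PS f1 x"
proof -
  assume a: "0 \<le> x" "x < 1"
  have "f1 0 \<le> PS f1 x" by (rule PS_ge0[where M=1]) (use a f1_nonneg f1_bdd in auto)
  then show ?thesis by (simp add: f1_def)
qed

lemma F1_top: "filterlim (PS f1) at_top (at_left 1)"
proof -
  have a: "filterlim (\<lambda>x::real. - ln (1 - x) / pi) at_top (at_left 1)" by real_asymp
  have "filterlim (\<lambda>x. (PS f1 x + ln (1 - x) / pi) + (- ln (1 - x) / pi)) at_top (at_left 1)"
    by (rule filterlim_tendsto_add_at_top[OF K_lim a])
  then show ?thesis by simp
qed


definition vv :: "nat \<Rightarrow> real" where "vv n = f1 n + f2 n / 2"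
definition Bc :: "nat \<Rightarrow> nat \<Rightarrow> real" where
  "Bc i j = vv i * vv j - 2 * ee i * f1 j - 2 * f1 i * ee j"

lemma vv_bdd: "\<bar>vv n\<bar> \<le> 2"
  using f1_bdd[of n] f2_bdd[of n] f1_nonneg[of n] f2_nonneg[of n] unfolding vv_def by simp

lemma v_eq: "v_fun x = 1/2 * PS f2 x + PS f1 x"
  unfolding v_fun_def hyp_f1 hyp_f2 ..

lemma u_eq2: "u_fun x = 1/16 * (1 - x) * PS f3 x + 1/2 * PS f2 x"
  unfolding u_fun_def hyp_f3 hyp_f2 ..

lemma Delta_eq: "Delta_fun x = (v_fun x)^2 - 4 * u_fun x * PS f1 x"
  unfolding Delta_fun_def hyp_f1 ..

lemma V_PS: "\<bar>x\<bar> < 1 \<Longrightarrow> v_fun x = PS vv x"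
proof -
  assume x: "\<bar>x\<bar> < 1"
  have s1: "(\<lambda>n. f1 n * x ^ n) sums PS f1 x" by (rule PS_sums[OF f1_bdd x])
  have s2: "(\<lambda>n. f2 n * x ^ n) sums PS f2 x" by (rule PS_sums[OF f2_bdd x])
  have s3: "(\<lambda>n. f1 n * x ^ n + (1/2) * (f2 n * x ^ n)) sums (PS f1 x + (1/2) * PS f2 x)"
    by (rule sums_add[OF s1 sums_mult[OF s2]])
  have e: "(\<lambda>n. f1 n * x ^ n + (1/2) * (f2 n * x ^ n)) = (\<lambda>n. vv n * x ^ n)"
  proof
    fix n show "f1 n * x ^ n + (1/2) * (f2 n * x ^ n) = vv n * x ^ n"
      unfolding vv_def by (simp add: distrib_right)
  qed
  have "PS vv x = PS f1 x + (1/2) * PS f2 x"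
    using sums_unique2[OF PS_sums[OF vv_bdd x] s3[unfolded e]] .
  then show ?thesis using v_eq[of x] by simp
qed

lemma isCont_F1: "\<bar>x\<bar> < 1 \<Longrightarrow> isCont (PS f1) x" by (rule isCont_PS[OF f1_bdd])
lemma isCont_F2: "\<bar>x\<bar> < 1 \<Longrightarrow> isCont (PS f2) x" by (rule isCont_PS[OF f2_bdd])
lemma isCont_F3: "\<bar>x\<bar> < 1 \<Longrightarrow> isCont (PS f3) x" by (rule isCont_PS[OF f3_bdd])

lemma isCont_u: "\<bar>x\<bar> < 1 \<Longrightarrow> isCont u_fun x"
proof -
  assume x: "\<bar>x\<bar> < 1"
  have "isCont (\<lambda>x. 1/16 * (1 - x) * PS f3 x + 1/2 * PS f2 x) x"
    using isCont_F2[OF x] isCont_F3[OF x] by (intro continuous_intros) auto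
  then show ?thesis unfolding u_eq2[abs_def] .
qed

lemma isCont_v: "\<bar>x\<bar> < 1 \<Longrightarrow> isCont v_fun x"
proof -
  assume x: "\<bar>x\<bar> < 1"
  have "isCont (\<lambda>x. 1/2 * PS f2 x + PS f1 x) x"
    using isCont_F1[OF x] isCont_F2[OF x] by (intro continuous_intros) auto
  then show ?thesis unfolding v_eq[abs_def] .
qed

lemma isCont_Delta: "\<bar>x\<bar> < 1 \<Longrightarrow> isCont Delta_fun x"
proof -
  assume x: "\<bar>x\<bar> < 1"
  have "isCont (\<lambda>x. (v_fun x)^2 - 4 * u_fun x * PS f1 x) x"
    using isCont_F1[OF x] isCont_u[OF x] isCont_v[OF x] by (intro continuous_intros) auto
  then show ?thesis unfolding Delta_eq[abs_def] .
qed

lemma PS_zero: "PS c 0 = c 0" unfolding PS_def by simp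

lemma f1_0: "f1 0 = 1" by (simp add: f1_def)
lemma f2_0: "f2 0 = 1" by (simp add: f2_def)

lemma v_0: "v_fun 0 = 3/2" unfolding v_eq PS_zero f1_0 f2_0 by simp
lemma Delta_0: "Delta_fun 0 = 0" unfolding Delta_eq v_0 u_0 PS_zero f1_0 by (simp add: power2_eq_square)

definition R :: "real \<Rightarrow> nat \<Rightarrow> real" where
  "R x i = x ^ i * (vv i * PS vv x - 2 * ee i * PS f1 x - 2 * f1 i * PS ee x)"

lemma Delta_rows: "0 \<le> x \<Longrightarrow> x < 1 \<Longrightarrow> (R x) sums Delta_fun x"
proof -
  assume a: "0 \<le> x" "x < 1"
  then have x: "\<bar>x\<bar> < 1" by simp
  let ?V = "PS vv x" and ?F = "PS f1 x" and ?U = "PS ee x"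
  have "(\<lambda>i. (vv i * x ^ i) * ?V - (ee i * x ^ i) * (2 * ?F) - (f1 i * x ^ i) * (2 * ?U))
        sums (?V * ?V - ?U * (2 * ?F) - ?F * (2 * ?U))"
    by (rule sums_diff[OF sums_diff[OF sums_mult2[OF PS_sums[OF vv_bdd x]] sums_mult2[OF PS_sums[OF ee_bdd x]]] sums_mult2[OF PS_sums[OF f1_bdd x]]])
  moreover have "(\<lambda>i. (vv i * x ^ i) * ?V - (ee i * x ^ i) * (2 * ?F) - (f1 i * x ^ i) * (2 * ?U)) = R x"
    by (rule ext) (simp add: R_def algebra_simps)
  moreover have "?V * ?V - ?U * (2 * ?F) - ?F * (2 * ?U) = Delta_fun x"
    unfolding Delta_eq V_PS[OF x] u_eq[OF a] by (simp add: power2_eq_square algebra_simps)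
  ultimately show ?thesis by simp
qed

lemma row_sums: "0 \<le> x \<Longrightarrow> x < 1 \<Longrightarrow> (\<lambda>j. Bc i j * (x ^ i * x ^ j)) sums R x i"
proof -
  assume a: "0 \<le> x" "x < 1"
  then have x: "\<bar>x\<bar> < 1" by simp
  have "(\<lambda>j. x ^ i * (vv i * (vv j * x ^ j) - 2 * ee i * (f1 j * x ^ j) - 2 * f1 i * (ee j * x ^ j)))
     sums (x ^ i * (vv i * PS vv x - 2 * ee i * PS f1 x - 2 * f1 i * PS ee x))"
    by (rule sums_mult[OF sums_diff[OF sums_diff[OF sums_mult[OF PS_sums[OF vv_bdd x]] sums_mult[OF PS_sums[OF f1_bdd x]]] sums_mult[OF PS_sums[OF ee_bdd x]]]])
  moreover have "(\<lambda>j. x ^ i * (vv i * (vv j * x ^ j) - 2 * ee i * (f1 j * x ^ j) - 2 * f1 i * (ee j * x ^ j)))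
      = (\<lambda>j. Bc i j * (x ^ i * x ^ j))"
    by (rule ext) (simp add: Bc_def algebra_simps)
  ultimately show ?thesis unfolding R_def by simp
qed

lemma Bfun: "0 < pp \<Longrightarrow> pp \<le> 1 \<Longrightarrow> 0 < qq \<Longrightarrow> qq \<le> (1::real) \<Longrightarrow>
  0 \<le> (1 + pp/2) * (1 + qq/2) - 9/4 * (pp^2/(1+pp)) - 9/4 * (qq^2/(1+qq))"
proof -
  assume pp: "0 < pp" "pp \<le> 1" and qq: "0 < qq" "qq \<le> 1"
  have hp: "pp^2/(1+pp) \<le> pp/2"
  proof -
    have "pp^2 * 2 \<le> pp * (1 + pp)" using pp by (simp add: power2_eq_square algebra_simps mult_left_mono)
    then show ?thesis using pp by (simp add: divide_simps)
  qed
  have hq: "qq^2/(1+qq) \<le> qq/2"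
  proof -
    have "qq^2 * 2 \<le> qq * (1 + qq)" using qq by (simp add: power2_eq_square algebra_simps mult_left_mono)
    then show ?thesis using qq by (simp add: divide_simps)
  qed
  have "0 \<le> (1-pp)*(1-qq) + 3/8 * (pp*(1-qq)) + 3/8 * ((1-pp)*qq)"
    using pp qq by (intro add_nonneg_nonneg mult_nonneg_nonneg) auto
  also have "\<dots> = (1 + pp/2) * (1 + qq/2) - 9/4 * (pp/2) - 9/4 * (qq/2)" by (simp add: field_simps)
  also have "\<dots> \<le> (1 + pp/2) * (1 + qq/2) - 9/4 * (pp^2/(1+pp)) - 9/4 * (qq^2/(1+qq))"
    using hp hq by linarith
  finally show ?thesis .
qed

lemma vv_form: "vv i = f1 i * (1 + (1/(real i + 1))/2)"
  unfolding vv_def f2_def f1_def by (simp add: field_simps)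

lemma ee_form: "ee i = 9/8 * f1 i * ((1/(real i + 1))^2 / (1 + 1/(real i + 1)))"
proof -
  have "(1/(real i + 1))^2 / (1 + 1/(real i + 1)) = 1/((real i + 1) * (real i + 2))"
    by (simp add: divide_simps power2_eq_square)
  then show ?thesis unfolding ee_def f1_def by simp
qed

lemma aux12: "a*(1+pa/2)*(b*(1+qa/2)) - 2*(9/8*a*X)*b - 2*a*(9/8*b*Y) = a*b*((1+pa/2)*(1+qa/2) - 9/4*X - 9/4*(Y::real))"
  by (simp add: algebra_simps)

lemma Bc_nonneg: "0 \<le> Bc i j"
proof -
  define pp where "pp = 1/(real i + 1)"
  define qq where "qq = 1/(real j + 1)"
  have p1: "0 < pp" unfolding pp_def by simp
  have p2: "pp \<le> 1" unfolding pp_def by (simp add: field_simps)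
  have q1: "0 < qq" unfolding qq_def by simp
  have q2: "qq \<le> 1" unfolding qq_def by (simp add: field_simps)
  have "Bc i j = f1 i * f1 j * ((1 + pp/2) * (1 + qq/2) - 9/4 * (pp^2/(1+pp)) - 9/4 * (qq^2/(1+qq)))"
    unfolding Bc_def vv_form ee_form pp_def[symmetric] qq_def[symmetric] by (rule aux12)
  also have "\<dots> \<ge> 0" using Bfun[OF p1 p2 q1 q2] f1_nonneg[of i] f1_nonneg[of j] by simp
  finally show ?thesis .
qed

lemma Bc01: "Bc 0 1 > 0"
  unfolding Bc_def vv_def f1_def f2_def ee_def by (simp add: A1 A1' power2_eq_square)

lemma R_sums_diff: "0 \<le> x \<Longrightarrow> x \<le> y \<Longrightarrow> y < 1 \<Longrightarrow>
   (\<lambda>j. Bc i j * (y ^ i * y ^ j) - Bc i j * (x ^ i * x ^ j)) sums (R y i - R x i)"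
  by (rule sums_diff[OF row_sums row_sums]) auto

lemma term_mono: "0 \<le> x \<Longrightarrow> x \<le> y \<Longrightarrow> 0 \<le> (b::real) \<Longrightarrow> 0 \<le> b * (y ^ i * y ^ j) - b * (x ^ i * x ^ j)"
proof -
  assume a: "0 \<le> x" "x \<le> y" "0 \<le> b"
  have "x ^ i * x ^ j \<le> y ^ i * y ^ j" using a by (intro mult_mono power_mono) auto
  then have "b * (x ^ i * x ^ j) \<le> b * (y ^ i * y ^ j)" using a by (intro mult_left_mono) auto
  then show ?thesis by simp
qed

lemma R_mono: "0 \<le> x \<Longrightarrow> x \<le> y \<Longrightarrow> y < 1 \<Longrightarrow> R x i \<le> R y i"
proof -
  assume a: "0 \<le> x" "x \<le> y" "y < 1"
  have d: "(\<lambda>j. Bc i j * (y ^ i * y ^ j) - Bc i j * (x ^ i * x ^ j)) sums (R y i - R x i)"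
    by (rule R_sums_diff[OF a])
  have "0 \<le> (\<Sum>j. Bc i j * (y ^ i * y ^ j) - Bc i j * (x ^ i * x ^ j))"
  proof (rule suminf_nonneg)
    show "summable (\<lambda>j. Bc i j * (y ^ i * y ^ j) - Bc i j * (x ^ i * x ^ j))" using d by (rule sums_summable)
    show "0 \<le> Bc i j * (y ^ i * y ^ j) - Bc i j * (x ^ i * x ^ j)" for j
      by (rule term_mono) (use a Bc_nonneg in auto)
  qed
  then show ?thesis using d by (simp add: sums_iff)
qed

lemma R0_strict: "0 \<le> x \<Longrightarrow> x < y \<Longrightarrow> y < 1 \<Longrightarrow> R x 0 < R y 0"
proof -
  assume a: "0 \<le> x" "x < y" "y < 1"
  have d: "(\<lambda>j. Bc 0 j * (y ^ 0 * y ^ j) - Bc 0 j * (x ^ 0 * x ^ j)) sums (R y 0 - R x 0)"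
    by (rule R_sums_diff) (use a in auto)
  have "0 < (\<Sum>j. Bc 0 j * (y ^ 0 * y ^ j) - Bc 0 j * (x ^ 0 * x ^ j))"
  proof (rule suminf_pos2[where i=1])
    show "summable (\<lambda>j. Bc 0 j * (y ^ 0 * y ^ j) - Bc 0 j * (x ^ 0 * x ^ j))" using d by (rule sums_summable)
    show "0 \<le> Bc 0 j * (y ^ 0 * y ^ j) - Bc 0 j * (x ^ 0 * x ^ j)" for j
      by (rule term_mono) (use a Bc_nonneg in auto)
    show "0 < Bc 0 1 * (y ^ 0 * y ^ 1) - Bc 0 1 * (x ^ 0 * x ^ 1)" using a Bc01 by simp
  qed
  then show ?thesis using d by (simp add: sums_iff)
qed

lemma Delta_strict: "0 \<le> x \<Longrightarrow> x < y \<Longrightarrow> y < 1 \<Longrightarrow> Delta_fun x < Delta_fun y"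
proof -
  assume a: "0 \<le> x" "x < y" "y < 1"
  have d: "(\<lambda>i. R y i - R x i) sums (Delta_fun y - Delta_fun x)"
    by (rule sums_diff[OF Delta_rows Delta_rows]) (use a in auto)
  have "0 < (\<Sum>i. R y i - R x i)"
  proof (rule suminf_pos2[where i=0])
    show "summable (\<lambda>i. R y i - R x i)" using d by (rule sums_summable)
    show "0 \<le> R y i - R x i" for i using R_mono[of x y i] a by simp
    show "0 < R y 0 - R x 0" using R0_strict[OF a] by simp
  qed
  then show ?thesis using d by (simp add: sums_iff)
qed

lemma Delta_pos: "0 < x \<Longrightarrow> x < 1 \<Longrightarrow> 0 < Delta_fun x"
  using Delta_strict[of 0 x] Delta_0 by simp

lemma Delta_nonneg: "0 \<le> x \<Longrightarrow> x < 1 \<Longrightarrow> 0 \<le> Delta_fun x"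
  using Delta_pos[of x] Delta_0 by (cases "x = 0") auto

lemma v_ge_F: "0 \<le> x \<Longrightarrow> x < 1 \<Longrightarrow> PS f1 x \<le> v_fun x"
proof -
  assume a: "0 \<le> x" "x < 1"
  have "f2 0 \<le> PS f2 x" by (rule PS_ge0[where M=1]) (use a f2_nonneg f2_bdd in auto)
  then show ?thesis unfolding v_eq by (simp add: f2_0)
qed

lemma Delta_lower: "0 \<le> x \<Longrightarrow> x < 1 \<Longrightarrow> (PS f1 x)^2 - 3 * PS f1 x \<le> Delta_fun x"
proof -
  assume a: "0 \<le> x" "x < 1"
  have F: "1 \<le> PS f1 x" by (rule F1_ge1[OF a])
  have "(PS f1 x)^2 \<le> (v_fun x)^2" using v_ge_F[OF a] F by (intro power_mono) auto
  moreover have "4 * u_fun x * PS f1 x \<le> 3 * PS f1 x"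
  proof -
    have "2/pi < 2/3" using pi_gt3 by (simp add: field_simps)
    then have "4 * u_fun x \<le> 3" using u_lt[OF a] by linarith
    then show ?thesis using F by (intro mult_right_mono) auto
  qed
  ultimately show ?thesis unfolding Delta_eq by simp
qed

lemma Delta_top: "filterlim Delta_fun at_top (at_left 1)"
proof (rule filterlim_at_top_mono[OF F1_top])
  have "eventually (\<lambda>x. 4 \<le> PS f1 x) (at_left 1)"
    using F1_top unfolding filterlim_at_top by blast
  then show "eventually (\<lambda>x. PS f1 x \<le> Delta_fun x) (at_left 1)"
    using eventually_at_left_real[of 0 "1::real", OF zero_less_one]
  proof eventually_elim
    case (elim x)
    then have a: "0 \<le> x" "x < 1" by auto
    have "PS f1 x \<le> (PS f1 x)^2 - 3 * PS f1 x"
    proof -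
      have "4 * PS f1 x \<le> PS f1 x * PS f1 x" using elim by (intro mult_right_mono) auto
      then show ?thesis by (simp add: power2_eq_square)
    qed
    also have "\<dots> \<le> Delta_fun x" by (rule Delta_lower[OF a])
    finally show ?case .
  qed
qed

lemma Delta_part: "strict_mono_on {0<..<1} Delta_fun \<and> Delta_fun ` {0<..<1} = {0<..}"
proof (intro conjI)
  show "strict_mono_on {0<..<1} Delta_fun"
    unfolding strict_mono_on_def using Delta_strict by auto
  show "Delta_fun ` {0<..<1} = {0<..}"
  proof
    show "Delta_fun ` {0<..<1} \<subseteq> {0<..}" using Delta_pos by auto
    show "{0<..} \<subseteq> Delta_fun ` {0<..<1}"
    proof
      fix y :: real assume y: "y \<in> {0<..}"
      have "eventually (\<lambda>x. y < Delta_fun x) (at_left 1)"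
        using Delta_top unfolding filterlim_at_top_dense by blast
      then obtain t where t: "0 < t" "t < 1" "y < Delta_fun t" using exists_near1 by blast
      have "continuous_on {0..t} Delta_fun"
        using t by (intro continuous_at_imp_continuous_on ballI isCont_Delta) auto
      moreover have "Delta_fun 0 \<le> y" using y Delta_0 by simp
      ultimately obtain x where x: "0 \<le> x" "x \<le> t" "Delta_fun x = y"
        using IVT'[of Delta_fun 0 y t] t by auto
      then have "x \<noteq> 0" using y Delta_0 by auto
      then show "y \<in> Delta_fun ` {0<..<1}" using x t by force
    qed
  qed
qed


lemma aux13: "U \<noteq> 0 \<Longrightarrow> T \<noteq> 0 \<Longrightarrow> (2*V - T)*T = 4*U*F \<Longrightarrow> T/(2*U) = V/U - 2*F/(T::real)"
proof -
  assume a: "U \<noteq> 0" "T \<noteq> 0" "(2*V - T)*T = 4*U*F"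
  have "V/U - 2*F/T = (2*V*T - 4*U*F)/(2*U*T)" using a(1,2) by (simp add: field_simps)
  also have "2*V*T - 4*U*F = T*T" using a(3) by (simp add: algebra_simps)
  also have "T*T/(2*U*T) = T/(2*U)" using a(2) by simp
  finally show ?thesis by simp
qed

lemma sqrt_div_aux: "F > 0 \<Longrightarrow> sqrt D / F = sqrt (D / F^2)"
  by (simp add: real_sqrt_divide)

definition Cn :: real where "Cn = (\<Sum>n. real n * ee n)"

lemma nee_bound: "\<bar>real n * ee n\<bar> \<le> (9/4) * (1 / (real n + 1)^2)"
proof -
  have a: "A n ^ 2 \<le> 2 / (real n + 1)" by (rule A_sq_le)
  have "real n * ee n = 9/8 * A n ^ 2 * (real n / ((real n + 1) * (real n + 2)))"
    unfolding ee_def by (simp add: field_simps)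
  also have "\<dots> \<le> 9/8 * (2 / (real n + 1)) * (1 / (real n + 1))"
  proof (intro mult_mono)
    show "real n / ((real n + 1) * (real n + 2)) \<le> 1 / (real n + 1)"
      by (simp add: divide_simps)
  qed (use a in auto)
  also have "\<dots> = (9/4) * (1 / (real n + 1)^2)" by (simp add: power2_eq_square)
  finally show ?thesis using ee_pos[of n] by simp
qed

lemma summable_nee: "summable (\<lambda>n. real n * ee n)"
  by (rule summable_comparison_test[OF _ summable_mult[OF summable_inv_sq_Suc, of "9/4"]])
     (use nee_bound in auto)

lemma one_minus_pow: "0 \<le> x \<Longrightarrow> x \<le> 1 \<Longrightarrow> 1 - x ^ n \<le> real n * (1 - (x::real))"
  using Bernoulli_inequality[of "x - 1" n] by (simp add: algebra_simps)

lemma u_gap: "0 \<le> x \<Longrightarrow> x < 1 \<Longrightarrow> 2/pi - u_fun x \<le> Cn * (1 - x)"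
proof -
  assume a: "0 \<le> x" "x < 1"
  have sx: "(\<lambda>n. ee n * x ^ n) sums u_fun x" using PS_sums[OF ee_bdd, of x] a u_eq[OF a] by simp
  have d: "(\<lambda>n. ee n - ee n * x ^ n) sums (2/pi - u_fun x)" by (rule sums_diff[OF sum_ee sx])
  have c: "(\<lambda>n. (1 - x) * (real n * ee n)) sums ((1 - x) * Cn)"
    unfolding Cn_def by (rule sums_mult[OF summable_sums[OF summable_nee]])
  have "(\<Sum>n. ee n - ee n * x ^ n) \<le> (\<Sum>n. (1 - x) * (real n * ee n))"
  proof (rule suminf_le)
    fix n
    have "ee n * (1 - x ^ n) \<le> ee n * (real n * (1 - x))"
      using one_minus_pow[of x n] a ee_pos[of n] by (intro mult_left_mono) auto
    then show "ee n - ee n * x ^ n \<le> (1 - x) * (real n * ee n)" by (simp add: algebra_simps)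
  qed (use d c in \<open>auto simp: sums_iff\<close>)
  then show ?thesis using d c by (simp add: sums_iff algebra_simps)
qed

lemma Cn_nonneg: "0 \<le> Cn"
  unfolding Cn_def using ee_pos by (intro suminf_nonneg summable_nee) (auto simp: less_imp_le)

lemma ln4: "ln (4::real) = 2 * ln 2"
proof -
  have "ln ((2::real)^2) = 2 * ln 2" by (subst ln_realpow) auto
  then show ?thesis by simp
qed

lemma w_plus_decomp:
  assumes a: "0 \<le> x" "x < 1"
  shows "w_plus x = (1/2 * ln (1 - x) + (pi/2) * PS f1 x) + PS f1 x * (1 / u_fun x - pi/2)
     + (PS f2 x / 2) / u_fun x - 2 * PS f1 x / (v_fun x + sqrt (Delta_fun x))"
proof -
  define F where "F = PS f1 x"
  define G where "G = PS f2 x"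
  define U where "U = u_fun x"
  define V where "V = v_fun x"
  define D where "D = Delta_fun x"
  define S where "S = sqrt D"
  define T where "T = V + S"
  have F1: "1 \<le> F" unfolding F_def by (rule F1_ge1[OF a])
  have U: "9/16 \<le> U" unfolding U_def by (rule u_ge[OF a])
  have VF: "F \<le> V" unfolding F_def V_def by (rule v_ge_F[OF a])
  have D0: "0 \<le> D" unfolding D_def by (rule Delta_nonneg[OF a])
  have S0: "0 \<le> S" unfolding S_def using D0 by simp
  have SS: "S * S = D" unfolding S_def using abs_of_nonneg[OF D0] by (simp only: real_sqrt_mult_self)
  have Deq: "D = V^2 - 4*U*F" unfolding D_def V_def U_def F_def by (rule Delta_eq)
  have Veq: "V = 1/2 * G + F" unfolding V_def G_def F_def by (rule v_eq)
  have Tpos: "T > 0" unfolding T_def using F1 VF S0 by linarith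
  have key: "(2*V - T)*T = 4*U*F"
  proof -
    have "(2*V - T)*T = (V - S)*(V + S)" unfolding T_def by (simp add: algebra_simps)
    also have "\<dots> = V*V - S*S" by (simp add: algebra_simps)
    also have "\<dots> = 4*U*F" using SS Deq by (simp add: power2_eq_square)
    finally show ?thesis .
  qed
  have "T/(2*U) = V/U - 2*F/T" by (rule aux13) (use U Tpos key in auto)
  also have "V/U = (pi/2) * F + F * (1/U - pi/2) + (G/2)/U"
    unfolding Veq using U by (simp add: field_simps)
  finally have "T/(2*U) = (pi/2) * F + F * (1/U - pi/2) + (G/2)/U - 2*F/T" .
  moreover have "w_plus x = 1/2 * ln (1 - x) + T/(2*U)"
    unfolding w_plus_def T_def S_def V_def D_def U_def ..
  ultimately show ?thesis unfolding F_def[symmetric] G_def[symmetric] U_def[symmetric] V_def[symmetric]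
    D_def[symmetric] S_def[symmetric] T_def[symmetric] by simp
qed

lemma T1_lim: "((\<lambda>x. 1/2 * ln (1 - x) + (pi/2) * PS f1 x) \<longlongrightarrow> ln 4) (at_left 1)"
proof -
  have "((\<lambda>x. (pi/2) * (PS f1 x + ln (1 - x) / pi)) \<longlongrightarrow> (pi/2) * (4 * ln 2 / pi)) (at_left 1)"
    by (rule tendsto_mult[OF tendsto_const K_lim])
  moreover have "(pi/2) * (4 * ln 2 / pi) = ln 4" by (simp add: ln4)
  moreover have "(\<lambda>x. (pi/2) * (PS f1 x + ln (1 - x) / pi)) = (\<lambda>x. 1/2 * ln (1 - x) + (pi/2) * PS f1 x)"
    by (rule ext) (simp add: field_simps)
  ultimately show ?thesis by simp
qed

lemma T2_lim: "((\<lambda>x. PS f1 x * (1 / u_fun x - pi/2)) \<longlongrightarrow> 0) (at_left 1)"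
proof (rule tendsto_sandwich[where f = "\<lambda>_. 0" and h = "\<lambda>x. (1 - ln (1 - x) / pi) * ((8*pi/9) * (Cn * (1 - x)))"])
  have ev: "eventually (\<lambda>x. x \<in> {0<..<1}) (at_left (1::real))"
    using eventually_at_left_real[of 0 "1::real", OF zero_less_one] .
  show "eventually (\<lambda>x. 0 \<le> PS f1 x * (1 / u_fun x - pi/2)) (at_left 1)"
    using ev
  proof eventually_elim
    case (elim x)
    then have a: "0 \<le> x" "x < 1" by auto
    have "u_fun x < 2/pi" by (rule u_lt[OF a])
    moreover have "u_fun x > 0" using u_ge[OF a] by simp
    ultimately have "pi/2 \<le> 1 / u_fun x" by (simp add: field_simps)
    then show ?case using F1_ge1[OF a] by simp
  qed
  show "eventually (\<lambda>x. PS f1 x * (1 / u_fun x - pi/2) \<le> (1 - ln (1 - x) / pi) * ((8*pi/9) * (Cn * (1 - x)))) (at_left 1)"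
    using ev
  proof eventually_elim
    case (elim x)
    then have a: "0 \<le> x" "x < 1" by auto
    have U: "9/16 \<le> u_fun x" by (rule u_ge[OF a])
    have Ult: "u_fun x < 2/pi" by (rule u_lt[OF a])
    have g: "2/pi - u_fun x \<le> Cn * (1 - x)" by (rule u_gap[OF a])
    have e: "1 / u_fun x - pi/2 = (pi / (2 * u_fun x)) * (2/pi - u_fun x)"
      using U by (simp add: field_simps)
    have b1: "pi / (2 * u_fun x) \<le> 8*pi/9"
      using U by (simp add: field_simps)
    have "1 / u_fun x - pi/2 \<le> (8*pi/9) * (Cn * (1 - x))"
      unfolding e by (rule mult_mono[OF b1 g]) (use Ult U in auto)
    moreover have "0 \<le> PS f1 x" using F1_ge1[OF a] by simp
    ultimately have "PS f1 x * (1 / u_fun x - pi/2) \<le> PS f1 x * ((8*pi/9) * (Cn * (1 - x)))"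
      by (rule mult_left_mono)
    also have "\<dots> \<le> (1 - ln (1 - x) / pi) * ((8*pi/9) * (Cn * (1 - x)))"
      by (rule mult_right_mono[OF F1_upper[OF a]]) (use Cn_nonneg a in auto)
    finally show ?case .
  qed
  have "((\<lambda>x::real. (1 - ln (1 - x) / pi) * (1 - x)) \<longlongrightarrow> 0) (at_left 1)" by real_asymp
  then have "((\<lambda>x. ((1 - ln (1 - x) / pi) * (1 - x)) * (8*pi/9 * Cn)) \<longlongrightarrow> 0 * (8*pi/9 * Cn)) (at_left 1)"
    by (rule tendsto_mult[OF _ tendsto_const])
  moreover have "(\<lambda>x. ((1 - ln (1 - x) / pi) * (1 - x)) * (8*pi/9 * Cn)) = (\<lambda>x. (1 - ln (1 - x) / pi) * ((8*pi/9) * (Cn * (1 - x))))"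
    by (rule ext) (simp only: mult_ac)
  ultimately show "((\<lambda>x. (1 - ln (1 - x) / pi) * ((8*pi/9) * (Cn * (1 - x)))) \<longlongrightarrow> 0) (at_left 1)" by simp
qed simp_all

lemma F2_lim: "(PS f2 \<longlongrightarrow> 4/pi) (at_left 1)"
  using PS_lim1[of f2] f2_nonneg sum_f2 by (simp add: sums_iff)

lemma T3_lim: "((\<lambda>x. (PS f2 x / 2) / u_fun x) \<longlongrightarrow> 1) (at_left 1)"
proof -
  have "((\<lambda>x. (PS f2 x / 2) / u_fun x) \<longlongrightarrow> ((4/pi)/2) / (2/pi)) (at_left 1)"
    by (intro tendsto_divide tendsto_intros F2_lim u_lim) auto
  then show ?thesis by simp
qed

lemma T4_lim: "((\<lambda>x. 2 * PS f1 x / (v_fun x + sqrt (Delta_fun x))) \<longlongrightarrow> 1) (at_left 1)"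
proof -
  define iF where "iF x = inverse (PS f1 x)" for x
  have iF0: "(iF \<longlongrightarrow> 0) (at_left 1)" unfolding iF_def[abs_def] by (rule tendsto_inverse_0_at_top[OF F1_top])
  let ?W = "\<lambda>x. 1 + (1/2) * (PS f2 x * iF x)"
  have l1: "(?W \<longlongrightarrow> 1 + (1/2) * ((4/pi) * 0)) (at_left 1)"
    by (intro tendsto_add tendsto_mult tendsto_const F2_lim iF0)
  have l1': "(?W \<longlongrightarrow> 1) (at_left 1)" using l1 by simp
  have l3: "((\<lambda>x. ?W x + sqrt ((?W x)^2 - 4 * u_fun x * iF x)) \<longlongrightarrow> 1 + sqrt (1^2 - 4 * (2/pi) * 0)) (at_left 1)"
    by (intro tendsto_intros l1' u_lim iF0)
  then have l3': "((\<lambda>x. ?W x + sqrt ((?W x)^2 - 4 * u_fun x * iF x)) \<longlongrightarrow> 2) (at_left 1)" by simp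
  have l2: "((\<lambda>x. 2 / (?W x + sqrt ((?W x)^2 - 4 * u_fun x * iF x))) \<longlongrightarrow> 2 / 2) (at_left 1)"
    by (rule tendsto_divide[OF tendsto_const l3']) simp
  have ev: "eventually (\<lambda>x. 2 / (?W x + sqrt ((?W x)^2 - 4 * u_fun x * iF x))
             = 2 * PS f1 x / (v_fun x + sqrt (Delta_fun x))) (at_left 1)"
    using eventually_at_left_real[of 0 "1::real", OF zero_less_one]
  proof eventually_elim
    case (elim x)
    then have a: "0 \<le> x" "x < 1" by auto
    define F where "F = PS f1 x"
    have F: "1 \<le> F" unfolding F_def by (rule F1_ge1[OF a])
    have W: "?W x = v_fun x / F" unfolding iF_def v_eq F_def[symmetric] using F by (simp add: field_simps)
    have D1: "(?W x)^2 - 4 * u_fun x * iF x = (v_fun x / F)^2 - 4 * u_fun x * (1/F)"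
      unfolding W unfolding iF_def F_def[symmetric] by (simp add: inverse_eq_divide)
    have D2: "(v_fun x / F)^2 - 4 * u_fun x * (1/F) = Delta_fun x / F^2"
      unfolding Delta_eq F_def[symmetric] using F by (simp add: field_simps power2_eq_square)
    have D: "(?W x)^2 - 4 * u_fun x * iF x = Delta_fun x / F^2" using D1 D2 by simp
    have S: "sqrt (Delta_fun x / F^2) = sqrt (Delta_fun x) / F" using F by (simp add: real_sqrt_divide)
    have "2 / (?W x + sqrt ((?W x)^2 - 4 * u_fun x * iF x)) = 2 / (v_fun x / F + sqrt (Delta_fun x) / F)"
      unfolding D unfolding S unfolding W ..
    also have "\<dots> = 2 * F / (v_fun x + sqrt (Delta_fun x))"
      using F by (simp add: field_simps add_divide_distrib[symmetric])
    finally show ?case unfolding F_def .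
  qed
  from Lim_transform_eventually[OF l2 ev] show ?thesis by simp
qed

lemma w_plus_lim: "(w_plus \<longlongrightarrow> ln 4) (at_left 1)"
proof -
  have "((\<lambda>x. (1/2 * ln (1 - x) + (pi/2) * PS f1 x) + PS f1 x * (1 / u_fun x - pi/2)
     + (PS f2 x / 2) / u_fun x - 2 * PS f1 x / (v_fun x + sqrt (Delta_fun x))) \<longlongrightarrow> ln 4 + 0 + 1 - 1) (at_left 1)"
    by (intro tendsto_diff tendsto_add T1_lim T2_lim T3_lim T4_lim)
  moreover have "eventually (\<lambda>x. (1/2 * ln (1 - x) + (pi/2) * PS f1 x) + PS f1 x * (1 / u_fun x - pi/2)
     + (PS f2 x / 2) / u_fun x - 2 * PS f1 x / (v_fun x + sqrt (Delta_fun x)) = w_plus x) (at_left 1)"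
    using eventually_at_left_real[of 0 "1::real", OF zero_less_one]
    by eventually_elim (simp add: w_plus_decomp)
  ultimately show ?thesis using Lim_transform_eventually by fastforce
qed


lemma isCont_w_plus: "0 \<le> x \<Longrightarrow> x < 1 \<Longrightarrow> isCont w_plus x"
proof -
  assume a: "0 \<le> x" "x < 1"
  then have x: "\<bar>x\<bar> < 1" by simp
  have u: "u_fun x \<noteq> 0" using u_ge[OF a] by simp
  have "isCont (\<lambda>x. 1/2 * ln (1 - x) + (v_fun x + sqrt (Delta_fun x)) / (2 * u_fun x)) x"
    using isCont_v[OF x] isCont_Delta[OF x] isCont_u[OF x] u a by (intro continuous_intros) auto
  then show ?thesis unfolding w_plus_def[abs_def] .
qed

lemma isCont_w_minus: "0 \<le> x \<Longrightarrow> x < 1 \<Longrightarrow> isCont w_minus x"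
proof -
  assume a: "0 \<le> x" "x < 1"
  then have x: "\<bar>x\<bar> < 1" by simp
  have u: "u_fun x \<noteq> 0" using u_ge[OF a] by simp
  have "isCont (\<lambda>x. 1/2 * ln (1 - x) + (v_fun x - sqrt (Delta_fun x)) / (2 * u_fun x)) x"
    using isCont_v[OF x] isCont_Delta[OF x] isCont_u[OF x] u a by (intro continuous_intros) auto
  then show ?thesis unfolding w_minus_def[abs_def] .
qed

lemma w_plus_0: "w_plus 0 = 4/3"
  unfolding w_plus_def v_0 u_0 Delta_0 by simp

lemma w_minus_0: "w_minus 0 = 4/3"
  unfolding w_minus_def v_0 u_0 Delta_0 by simp

lemma w_minus_le: "0 \<le> x \<Longrightarrow> x < 1 \<Longrightarrow> w_minus x \<le> 1/2 * ln (1 - x) + 2"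
proof -
  assume a: "0 \<le> x" "x < 1"
  define F where "F = PS f1 x"
  define U where "U = u_fun x"
  define V where "V = v_fun x"
  define D where "D = Delta_fun x"
  define S where "S = sqrt D"
  have F1: "1 \<le> F" unfolding F_def by (rule F1_ge1[OF a])
  have U: "9/16 \<le> U" unfolding U_def by (rule u_ge[OF a])
  have VF: "F \<le> V" unfolding F_def V_def by (rule v_ge_F[OF a])
  have D0: "0 \<le> D" unfolding D_def by (rule Delta_nonneg[OF a])
  have S0: "0 \<le> S" unfolding S_def using D0 by simp
  have SS: "S * S = D" unfolding S_def using abs_of_nonneg[OF D0] by (simp only: real_sqrt_mult_self)
  have Deq: "D = V^2 - 4*U*F" unfolding D_def V_def U_def F_def by (rule Delta_eq)
  have T: "F \<le> V + S" using VF S0 by simp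
  have key: "(V - S) * (V + S) = 4*U*F" using SS Deq by (simp add: algebra_simps power2_eq_square)
  have "V - S = 4*U*F / (V + S)" using key T F1 by (simp add: eq_divide_eq)
  also have "\<dots> \<le> 4*U*F / F" using T F1 U by (intro divide_left_mono) auto
  also have "\<dots> = 4*U" using F1 by simp
  finally have "(V - S) / (2*U) \<le> 4*U / (2*U)" using U by (intro divide_right_mono) auto
  also have "\<dots> = 2" using U by simp
  finally have "(V - S) / (2*U) \<le> 2" .
  then show ?thesis unfolding w_minus_def F_def[symmetric] U_def[symmetric] V_def[symmetric]
    D_def[symmetric] S_def[symmetric] by simp
qed

lemma w_minus_lim: "filterlim w_minus at_bot (at_left 1)"
proof (rule filterlim_at_bot_mono)
  show "filterlim (\<lambda>x::real. 1/2 * ln (1 - x) + 2) at_bot (at_left 1)" by real_asymp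
  show "eventually (\<lambda>x. w_minus x \<le> 1/2 * ln (1 - x) + 2) (at_left 1)"
    using eventually_at_left_real[of 0 "1::real", OF zero_less_one]
  proof eventually_elim
    case (elim x) then show ?case using w_minus_le[of x] by simp
  qed
qed

lemma W_part: "\<exists>W :: real \<Rightarrow> real. continuous_on {0..1} W
          \<and> (\<forall>x\<in>{0..<1}. W x = w_plus x)
          \<and> W 0 = 4/3 \<and> W 1 = ln 4
          \<and> (\<exists>a_c. a_c \<in> W ` {0..1} \<and> (\<forall>x\<in>{0..1}. W x \<le> a_c) \<and> a_c \<ge> ln 4)"
proof -
  define W where "W x = (if x < 1 then w_plus x else ln 4)" for x :: real
  have cont: "continuous_on {0..1} W"
  proof (rule continuous_on_IccI)
    have "(w_plus \<longlongrightarrow> w_plus 0) (at_right 0)"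
      using isCont_w_plus[of 0] by (simp add: isCont_def filterlim_at_split)
    moreover have "eventually (\<lambda>x. w_plus x = W x) (at_right 0)"
      using eventually_at_right_real[of 0 "1::real", OF zero_less_one]
      by eventually_elim (simp add: W_def)
    ultimately show "(W \<longlongrightarrow> W 0) (at_right 0)"
      using Lim_transform_eventually by (fastforce simp: W_def)
    have "eventually (\<lambda>x. w_plus x = W x) (at_left 1)"
      using eventually_at_left_real[of 0 "1::real", OF zero_less_one]
      by eventually_elim (simp add: W_def)
    then show "(W \<longlongrightarrow> W 1) (at_left 1)"
      using Lim_transform_eventually[OF w_plus_lim] by (simp add: W_def)
    fix x :: real assume x: "0 < x" "x < 1"
    have "eventually (\<lambda>y. w_plus y = W y) (nhds x)"
      using eventually_nhds_in_open[of "{..<1}" x] x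
      by (auto elim!: eventually_mono simp: W_def)
    then have "isCont W x \<longleftrightarrow> isCont w_plus x" by (rule isCont_cong[symmetric])
    then have "isCont W x" using isCont_w_plus[of x] x by simp
    then show "(W \<longlongrightarrow> W x) (at x)" by (simp add: isCont_def)
  qed simp
  obtain m where m: "m \<in> {0..1}" "\<forall>y\<in>{0..1}. W y \<le> W m"
    using continuous_attains_sup[OF compact_Icc _ cont] by auto
  have "W 1 \<le> W m" using m by simp
  then have "ln 4 \<le> W m" by (simp add: W_def)
  moreover have "W 0 = 4/3" using w_plus_0 by (simp add: W_def)
  moreover have "W m \<in> W ` {0..1}" using m(1) by blast
  moreover have "\<forall>x\<in>{0..<1}. W x = w_plus x" by (simp add: W_def)
  moreover have "W 1 = ln 4" by (simp add: W_def)
  ultimately show ?thesis using cont m(2) by blast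
qed

theorem mainTheorem11:
  shows "(strict_mono_on {0..<1} u_fun \<and> u_fun ` {0..<1} = {9/16..<2/pi})
    \<and> (strict_mono_on {0<..<1} Delta_fun \<and> Delta_fun ` {0<..<1} = {0<..})
    \<and> (\<exists>W :: real \<Rightarrow> real. continuous_on {0..1} W
          \<and> (\<forall>x\<in>{0..<1}. W x = w_plus x)
          \<and> W 0 = 4/3 \<and> W 1 = ln 4
          \<and> (\<exists>a_c. a_c \<in> W ` {0..1} \<and> (\<forall>x\<in>{0..1}. W x \<le> a_c) \<and> a_c \<ge> ln 4))
    \<and> (continuous_on {0..<1} w_minus \<and> w_minus 0 = 4/3
          \<and> filterlim w_minus at_bot (at_left 1))"
proof (intro conjI)
  show "strict_mono_on {0..<1} u_fun" using u_part by blast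
  show "u_fun ` {0..<1} = {9/16..<2/pi}" using u_part by blast
  show "strict_mono_on {0<..<1} Delta_fun" using Delta_part by blast
  show "Delta_fun ` {0<..<1} = {0<..}" using Delta_part by blast
  show "\<exists>W :: real \<Rightarrow> real. continuous_on {0..1} W
          \<and> (\<forall>x\<in>{0..<1}. W x = w_plus x)
          \<and> W 0 = 4/3 \<and> W 1 = ln 4
          \<and> (\<exists>a_c. a_c \<in> W ` {0..1} \<and> (\<forall>x\<in>{0..1}. W x \<le> a_c) \<and> a_c \<ge> ln 4)"
    by (rule W_part)
  show "continuous_on {0..<1} w_minus"
    by (intro continuous_at_imp_continuous_on ballI isCont_w_minus) auto
  show "w_minus 0 = 4/3" by (rule w_minus_0)
  show "filterlim w_minus at_bot (at_left 1)" by (rule w_minus_lim)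
qed

end
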